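(* The families $\{d_\xi^{-1/2}\Pi_{\xi\alpha\beta}\}_{\xi,\alpha,\beta}$ and $\{d_\xi^{-1/2}\mathrm{Twirl}_{\xi\alpha\beta}\}_{\xi,\alpha,\beta}$ (over all isomorphism types $\xi$ occurring in $\mathcal L(V)$ and $1\le\alpha,\beta\le m_\xi$) are both orthonormal bases of $\mathrm{Hom}_G(\mathcal L(V),\mathcal L(V))$, which has dimension $\sum_\xi m_\xi^2$. Consequently the square matrix $U$ with entries \[ U_{(\xi,\alpha,\beta),(\rho,\mu,\nu)}=\Big\langle\!\!\Big\langle \tfrac1{\sqrt{d_\xi}}\Pi_{\xi\alpha\beta},\tfrac1{\sqrt{d_\rho}}\mathrm{Twirl}_{\rho\mu\nu}\Big\rangle\!\!\Big\rangle \] is unitary.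
   Context: Let $G$ be a group and $V$ a finite-dimensional complex Hilbert space carrying a unitary representation $\rho$ of $G$; $G$ acts on $\mathcal L(V)$ by conjugation $g\cdot X=\rho(g)X\rho(g)^\dagger$, unitarily for the Hilbert–Schmidt inner product $\langle X_1,X_2\rangle=\mathrm{Tr}(X_1^\dagger X_2)$. Let $\mathcal L(V)=\bigoplus_\xi\mathcal E_\xi$ be the isotypic decomposition, $m_\xi$ the multiplicity and $d_\xi$ the dimension of the irreducible type $\xi$. Choose an orthogonal decomposition $\mathcal E_\xi=\bigoplus_{\alpha=1}^{m_\xi}\mathcal E_{\xi\alpha}$ into irreducible subrepresentations, $G$-equivariant isometric isomorphisms $\phi^\xi_{1\alpha}:\mathcal E_{\xi1}\to\mathcal E_{\xi\alpha}$ with $\phi^\xi_{11}=\mathrm{id}$, and set $\phi^\xi_{\alpha\beta}=\phi^\xi_{1\beta}(\phi^\xi_{1\alpha})^\dagger$. Fix an orthonormal basis $\{E_i^1\}_{i=1}^{d_\xi}$ of $\mathcal E_{\xi1}$ and put $E_i^\alpha=\phi^\xi_{1\alpha}(E_i^1)$ (the dependence on $\xi$ is suppressed). Define the projector matrix units $\Pi_{\xi\alpha\beta}(X)=\sum_{i=1}^{d_\xi}\langle E_i^\alpha,X\rangle E_i^\beta$ and twirl matrix units $\mathrm{Twirl}_{\xi\alpha\beta}(X)=\sum_{i=1}^{d_\xi}(E_i^\alpha)^\dagger XE_i^\beta$. On linear maps $\mathcal L(V)\to\mathcal L(V)$ use $\langle\!\langle\mathcal S,\mathcal T\rangle\!\rangle=\mathrm{Tr}(\mathcal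 S^\dagger\mathcal T)=\sum_{Y\in\mathcal B}\langle\mathcal S(Y),\mathcal T(Y)\rangle$ ($\mathcal B$ any orthonormal basis of $\mathcal L(V)$). $\mathrm{Hom}_G(\mathcal L(V),\mathcal L(V))$ is the space of $G$-equivariant linear maps. *)

theory Defs
  imports "HOL-Analysis.Analysis" "HOL-Algebra.Group"
begin

text \<open>Operators on V = complex^'n are n x n complex matrices, L(V) = complex^'n^'n.\<close>

type_synonym 'n cmat = "complex^'n^'n"

definition madj :: "('n::finite) cmat \<Rightarrow> 'n cmat" where
  "madj A = (\<chi> i j. cnj (A $ j $ i))"

definition msc :: "complex \<Rightarrow> ('n::finite) cmat \<Rightarrow> 'n cmat" where
  "msc c A = (\<chi> i j. c * A $ i $ j)"

definition mtrace :: "('n::finite) cmat \<Rightarrow> complex" where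
  "mtrace A = (\<Sum>i\<in>UNIV. A $ i $ i)"

definition hs :: "('n::finite) cmat \<Rightarrow> 'n cmat \<Rightarrow> complex" where
  "hs X Y = mtrace (madj X ** Y)"

definition unitary_mat :: "('n::finite) cmat \<Rightarrow> bool" where
  "unitary_mat U \<longleftrightarrow> madj U ** U = mat 1 \<and> U ** madj U = mat 1"

definition unitary_rep :: "('g, 'b) monoid_scheme \<Rightarrow> ('g \<Rightarrow> ('n::finite) cmat) \<Rightarrow> bool" where
  "unitary_rep G r \<longleftrightarrow> group G \<and> (\<forall>g\<in>carrier G. unitary_mat (r g)) \<and>
     (\<forall>g\<in>carrier G. \<forall>h\<in>carrier G. r (g \<otimes>\<^bsub>G\<^esub> h) = r g ** r h)"

definition conj_act :: "('g \<Rightarrow> ('n::finite) cmat) \<Rightarrow> 'g \<Rightarrow> 'n cmat \<Rightarrow> 'n cmat" where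
  "conj_act r g X = r g ** X ** madj (r g)"

definition clinear_map :: "(('n::finite) cmat \<Rightarrow> 'n cmat) \<Rightarrow> bool" where
  "clinear_map T \<longleftrightarrow> (\<forall>X Y. T (X + Y) = T X + T Y) \<and> (\<forall>c X. T (msc c X) = msc c (T X))"

definition HomG :: "('g, 'b) monoid_scheme \<Rightarrow> ('g \<Rightarrow> ('n::finite) cmat) \<Rightarrow> ('n cmat \<Rightarrow> 'n cmat) set" where
  "HomG G r = {T. clinear_map T \<and> (\<forall>g\<in>carrier G. \<forall>X. T (conj_act r g X) = conj_act r g (T X))}"

definition munit :: "'n \<Rightarrow> 'n \<Rightarrow> ('n::finite) cmat" where
  "munit i j = (\<chi> k l. if k = i \<and> l = j then 1 else 0)"

text \<open>Inner product Tr(S^dagger T) = sum over an orthonormal basis Y of <S Y, T Y>.\<close>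
definition hsop :: "(('n::finite) cmat \<Rightarrow> 'n cmat) \<Rightarrow> ('n cmat \<Rightarrow> 'n cmat) \<Rightarrow> complex" where
  "hsop S T = (\<Sum>i\<in>UNIV. \<Sum>j\<in>UNIV. hs (S (munit i j)) (T (munit i j)))"

definition mspan :: "'a set \<Rightarrow> ('a \<Rightarrow> ('n::finite) cmat) \<Rightarrow> 'n cmat set" where
  "mspan I e = {X. \<exists>c. X = (\<Sum>a\<in>I. msc (c a) (e a))}"

definition msubspace :: "('n::finite) cmat set \<Rightarrow> bool" where
  "msubspace W \<longleftrightarrow> 0 \<in> W \<and> (\<forall>X\<in>W. \<forall>Y\<in>W. X + Y \<in> W) \<and> (\<forall>c. \<forall>X\<in>W. msc c X \<in> W)"

definition invariant_sub :: "('g, 'b) monoid_scheme \<Rightarrow> ('g \<Rightarrow> ('n::finite) cmat) \<Rightarrow> 'n cmat set \<Rightarrow> bool" where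
  "invariant_sub G r W \<longleftrightarrow> msubspace W \<and> (\<forall>g\<in>carrier G. \<forall>X\<in>W. conj_act r g X \<in> W)"

definition irreducible_sub :: "('g, 'b) monoid_scheme \<Rightarrow> ('g \<Rightarrow> ('n::finite) cmat) \<Rightarrow> 'n cmat set \<Rightarrow> bool" where
  "irreducible_sub G r W \<longleftrightarrow> invariant_sub G r W \<and> W \<noteq> {0} \<and>
     (\<forall>W'. W' \<subseteq> W \<longrightarrow> invariant_sub G r W' \<longrightarrow> W' = {0} \<or> W' = W)"

definition iso_sub :: "('g, 'b) monoid_scheme \<Rightarrow> ('g \<Rightarrow> ('n::finite) cmat) \<Rightarrow> 'n cmat set \<Rightarrow> 'n cmat set \<Rightarrow> bool" where
  "iso_sub G r W1 W2 \<longleftrightarrow> (\<exists>T. clinear_map T \<and> bij_betw T W1 W2 \<and>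
     (\<forall>g\<in>carrier G. \<forall>X\<in>W1. T (conj_act r g X) = conj_act r g (T X)))"

definition map_dim :: "((('n::finite) cmat \<Rightarrow> 'n cmat)) set \<Rightarrow> nat" where
  "map_dim S = (LEAST k. \<exists>f. (\<forall>l<k. f l \<in> S) \<and>
      (\<forall>T\<in>S. \<exists>c. T = (\<lambda>X. \<Sum>l<k. msc (c l) (f l X))))"

definition onb_maps :: "(('n::finite) cmat \<Rightarrow> 'n cmat) set \<Rightarrow> 'a set \<Rightarrow> ('a \<Rightarrow> ('n cmat \<Rightarrow> 'n cmat)) \<Rightarrow> bool" where
  "onb_maps S I f \<longleftrightarrow> (\<forall>a\<in>I. f a \<in> S) \<and>
     (\<forall>a\<in>I. \<forall>b\<in>I. hsop (f a) (f b) = (if a = b then 1 else 0)) \<and>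
     (\<forall>T\<in>S. \<exists>c. T = (\<lambda>X. \<Sum>a\<in>I. msc (c a) (f a X)))"

definition unitary_on :: "'a set \<Rightarrow> ('a \<Rightarrow> 'a \<Rightarrow> complex) \<Rightarrow> bool" where
  "unitary_on I U \<longleftrightarrow>
     (\<forall>a\<in>I. \<forall>b\<in>I. (\<Sum>c\<in>I. cnj (U c a) * U c b) = (if a = b then 1 else 0)) \<and>
     (\<forall>a\<in>I. \<forall>b\<in>I. (\<Sum>c\<in>I. U a c * cnj (U b c)) = (if a = b then 1 else 0))"

text \<open>Projector and twirl matrix units, with E x a i = E_i^a for type x.\<close>
definition PiU :: "('x \<Rightarrow> nat) \<Rightarrow> ('x \<Rightarrow> nat \<Rightarrow> nat \<Rightarrow> ('n::finite) cmat) \<Rightarrow> 'x \<Rightarrow> nat \<Rightarrow> nat \<Rightarrow> 'n cmat \<Rightarrow> 'n cmat" where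
  "PiU d E x a b X = (\<Sum>i\<in>{1..d x}. msc (hs (E x a i) X) (E x b i))"

definition TwirlU :: "('x \<Rightarrow> nat) \<Rightarrow> ('x \<Rightarrow> nat \<Rightarrow> nat \<Rightarrow> ('n::finite) cmat) \<Rightarrow> 'x \<Rightarrow> nat \<Rightarrow> nat \<Rightarrow> 'n cmat \<Rightarrow> 'n cmat" where
  "TwirlU d E x a b X = (\<Sum>i\<in>{1..d x}. madj (E x a i) ** X ** E x b i)"

definition idx3 :: "'x set \<Rightarrow> ('x \<Rightarrow> nat) \<Rightarrow> ('x \<times> nat \<times> nat) set" where
  "idx3 Xi m = {(x, a, b). x \<in> Xi \<and> a \<in> {1..m x} \<and> b \<in> {1..m x}}"

definition nPi where
  "nPi d E = (\<lambda>(x, a, b) X. msc (complex_of_real (1 / sqrt (real (d x)))) (PiU d E x a b X))"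

definition nTwirl where
  "nTwirl d E = (\<lambda>(x, a, b) X. msc (complex_of_real (1 / sqrt (real (d x)))) (TwirlU d E x a b X))"

end

theory Submission
  imports Defs "Jordan_Normal_Form.Spectral_Radius"
begin

no_notation Matrix.vec_index (infixl "$" 100)
lemmas cvec_eq_iff = Finite_Cartesian_Product.vec_eq_iff


lemma msc_nth[simp]: "msc c A $ i $ j = c * A $ i $ j" by (simp add: msc_def)
lemma madj_nth[simp]: "madj A $ i $ j = cnj (A $ j $ i)" by (simp add: madj_def)
lemma msc_add: "msc c (A + B) = msc c A + msc c B" by (simp add: cvec_eq_iff msc_def algebra_simps)
lemma msc_add_left: "msc (c + d) A = msc c A + msc d A" by (simp add: cvec_eq_iff msc_def algebra_simps)
lemma msc_msc: "msc c (msc d A) = msc (c*d) A" by (simp add: cvec_eq_iff algebra_simps)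
lemma msc_1[simp]: "msc 1 A = A" by (simp add: cvec_eq_iff)
lemma msc_0[simp]: "msc 0 A = 0" by (simp add: cvec_eq_iff)
lemma msc_zero[simp]: "msc c 0 = 0" by (simp add: cvec_eq_iff)
lemma sum_nth2: "(sum f S) $ i $ j = (\<Sum>x\<in>S. f x $ i $ j)"
  by (induct S rule: infinite_finite_induct) auto
lemma msc_sum: "msc c (sum f S) = (\<Sum>x\<in>S. msc c (f x))"
  by (simp add: cvec_eq_iff sum_nth2 sum_distrib_left)
lemma msc_sum_left: "msc (sum f S) A = (\<Sum>x\<in>S. msc (f x) A)"
  by (simp add: cvec_eq_iff sum_nth2 sum_distrib_right)
lemma msc_minus: "A + msc (-1) A = 0" by (simp add: cvec_eq_iff)

lemma hs_expand: "hs X Y = (\<Sum>k\<in>UNIV. \<Sum>i\<in>UNIV. cnj (X$i$k) * Y$i$k)"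
  unfolding hs_def mtrace_def matrix_matrix_mult_def by simp

lemma hs_add_right: "hs X (Y + Z) = hs X Y + hs X Z"
  by (simp add: hs_expand algebra_simps sum.distrib)
lemma hs_add_left: "hs (X + Y) Z = hs X Z + hs Y Z"
  by (simp add: hs_expand algebra_simps sum.distrib)
lemma hs_msc_right: "hs X (msc c Y) = c * hs X Y"
  by (simp add: hs_expand sum_distrib_left algebra_simps)
lemma hs_msc_left: "hs (msc c X) Y = cnj c * hs X Y"
  by (simp add: hs_expand sum_distrib_left algebra_simps)
lemma hs_zero_right[simp]: "hs X 0 = 0" unfolding hs_expand by (simp add: Finite_Cartesian_Product.zero_index)
lemma hs_zero_left[simp]: "hs 0 X = 0" unfolding hs_expand by (simp add: Finite_Cartesian_Product.zero_index)
lemma hs_sum_right: "hs X (sum f S) = (\<Sum>x\<in>S. hs X (f x))"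
  by (induct S rule: infinite_finite_induct) (auto simp: hs_add_right)
lemma hs_sum_left: "hs (sum f S) X = (\<Sum>x\<in>S. hs (f x) X)"
  by (induct S rule: infinite_finite_induct) (auto simp: hs_add_left)
lemma hs_cnj: "cnj (hs X Y) = hs Y X"
  by (simp add: hs_expand mult.commute)
lemma hs_self_zero: assumes "hs X X = 0" shows "X = 0"
proof -
  have "hs X X = of_real (\<Sum>k\<in>UNIV. \<Sum>i\<in>UNIV. (cmod (X$i$k))^2)"
  proof -
    have e: "cnj z * z = of_real ((cmod z)^2)" for z by (metis complex_norm_square mult.commute of_real_power)
    show ?thesis by (simp only: hs_expand e of_real_sum)
  qed
  with assms have "(\<Sum>k\<in>UNIV. \<Sum>i\<in>UNIV. (cmod (X$i$k))^2) = 0"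
    by (metis of_real_eq_0_iff)
  hence "\<forall>k. (\<Sum>i\<in>UNIV. (cmod (X$i$k))^2) = 0"
    by (subst (asm) sum_nonneg_eq_0_iff) (auto intro: sum_nonneg)
  hence "\<forall>k i. (cmod (X$i$k))^2 = 0"
    by (subst (asm) sum_nonneg_eq_0_iff) auto
  thus ?thesis by (simp add: cvec_eq_iff)
qed

lemma madj_mult: "madj (A ** B) = madj B ** madj A"
  unfolding matrix_matrix_mult_def by (simp add: cvec_eq_iff mult.commute)
lemma madj_madj[simp]: "madj (madj A) = A" by (simp add: cvec_eq_iff)
lemma mtrace_comm: "mtrace (A ** B) = mtrace (B ** A)"
  unfolding mtrace_def matrix_matrix_mult_def apply simp apply (subst sum.swap) apply (simp add: mult.commute) done

lemma hs_adj_id: "hs A (madj R ** B ** R) = hs (R ** A ** madj R) B"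
proof -
  have "hs A (madj R ** B ** R) = mtrace ((madj A ** madj R ** B) ** R)"
    unfolding hs_def by (simp add: matrix_mul_assoc)
  also have "\<dots> = mtrace (R ** (madj A ** madj R ** B))" by (rule mtrace_comm)
  also have "\<dots> = mtrace (madj (R ** A ** madj R) ** B)"
    by (simp add: madj_mult matrix_mul_assoc)
  finally show ?thesis unfolding hs_def .
qed

lemma msc_mult_left: "msc c A ** B = msc c (A ** B)"
  unfolding msc_def matrix_matrix_mult_def by (simp add: cvec_eq_iff sum_distrib_left mult.assoc)
lemma msc_mult_right: "A ** msc c B = msc c (A ** B)"
  unfolding msc_def matrix_matrix_mult_def by (simp add: cvec_eq_iff sum_distrib_left mult.assoc mult.left_commute)
lemma matrix_add_rdistrib': "(A + B) ** C = A ** C + B ** (C::'n::finite cmat)"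
  unfolding matrix_matrix_mult_def by (simp add: cvec_eq_iff sum.distrib distrib_right)
lemma sum_mult_left: "sum f S ** B = (\<Sum>x\<in>S. f x ** (B::'n::finite cmat))"
  by (induct S rule: infinite_finite_induct) (auto simp: matrix_add_rdistrib')
lemma sum_mult_right: "B ** sum f S = (\<Sum>x\<in>S. B ** (f x::'n::finite cmat))"
  by (induct S rule: infinite_finite_induct) (auto simp: matrix_add_ldistrib)


lemma jnf_mv: assumes "k < d" "A \<in> carrier_mat d d" "v \<in> carrier_vec d"
  shows "vec_index (A *\<^sub>v v) k = (\<Sum>l<d. A $$ (k,l) * vec_index v l)"
  using assms by (simp add: scalar_prod_def lessThan_atLeast0)

lemma L1_eigen:
  fixes M :: "nat \<Rightarrow> nat \<Rightarrow> complex"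
  assumes "d > 0"
  shows "\<exists>\<mu> v. (\<exists>k<d. v k \<noteq> 0) \<and> (\<forall>k<d. (\<Sum>l<d. M k l * v l) = \<mu> * v k)"
proof -
  define A where "A = Matrix.mat d d (\<lambda>(k,l). M k l)"
  have A: "A \<in> carrier_mat d d" unfolding A_def by simp
  from spectrum_non_empty[OF A assms] obtain \<mu> where "\<mu> \<in> spectrum A" by blast
  hence "eigenvalue A \<mu>" unfolding spectrum_def by simp
  then obtain v where ev: "eigenvector A v \<mu>" unfolding eigenvalue_def by blast
  hence v: "v \<in> carrier_vec d" and v0: "v \<noteq> 0\<^sub>v d" and Av: "A *\<^sub>v v = \<mu> \<cdot>\<^sub>v v"
    unfolding eigenvector_def using A by auto
  have "\<exists>k<d. vec_index v k \<noteq> 0"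
  proof (rule ccontr)
    assume "\<not> ?thesis"
    hence "v = 0\<^sub>v d" using v by (intro eq_vecI) auto
    with v0 show False by simp
  qed
  moreover have "\<forall>k<d. (\<Sum>l<d. M k l * vec_index v l) = \<mu> * vec_index v k"
  proof (intro allI impI)
    fix k assume k: "k < d"
    have "vec_index (A *\<^sub>v v) k = (\<Sum>l<d. A $$ (k,l) * vec_index v l)"
      by (rule jnf_mv[OF k A v])
    also have "\<dots> = (\<Sum>l<d. M k l * vec_index v l)"
      by (rule sum.cong) (auto simp: A_def k)
    finally show "(\<Sum>l<d. M k l * vec_index v l) = \<mu> * vec_index v k"
      using Av k v by simp
  qed
  ultimately show ?thesis by blast
qed

lemma L2_homog:
  fixes c :: "nat \<Rightarrow> nat \<Rightarrow> complex"
  assumes "k < N"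
  shows "\<exists>w. (\<exists>a<N. w a \<noteq> 0) \<and> (\<forall>l<k. (\<Sum>a<N. c a l * w a) = 0)"
proof -
  define A where "A = Matrix.mat N N (\<lambda>(l,a). if l < k then c a l else 0)"
  have A: "A \<in> carrier_mat N N" unfolding A_def by simp
  have "Determinant.det A = 0"
  proof -
    have "Determinant.det A = (\<Sum> p \<in> {p. p permutes {0 ..< N}}.
       signof p * (\<Prod> i = 0 ..< N. A $$ (i, p i)))" by (rule det_def'[OF A])
    also have "\<dots> = 0"
    proof (rule sum.neutral, intro ballI)
      fix p assume "p \<in> {p. p permutes {0 ..< N}}"
      hence p: "p permutes {0..<N}" by simp
      have "p k < N" using p assms by (simp add: permutes_in_image)
      hence "A $$ (k, p k) = 0" using assms unfolding A_def by simp
      hence "(\<Prod> i = 0 ..< N. A $$ (i, p i)) = 0"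
        using assms by (intro prod_zero) auto
      thus "signof p * (\<Prod> i = 0 ..< N. A $$ (i, p i)) = 0" by simp
    qed
    finally show ?thesis .
  qed
  with det_0_iff_vec_prod_zero[OF A] obtain v where
    v: "v \<in> carrier_vec N" and v0: "v \<noteq> 0\<^sub>v N" and Av: "A *\<^sub>v v = 0\<^sub>v N" by blast
  have "\<exists>a<N. vec_index v a \<noteq> 0"
  proof (rule ccontr)
    assume "\<not> ?thesis"
    hence "v = 0\<^sub>v N" using v by (intro eq_vecI) auto
    with v0 show False by simp
  qed
  moreover have "\<forall>l<k. (\<Sum>a<N. c a l * vec_index v a) = 0"
  proof (intro allI impI)
    fix l assume l: "l < k"
    hence lN: "l < N" using assms by simp
    have "vec_index (A *\<^sub>v v) l = (\<Sum>a<N. A $$ (l,a) * vec_index v a)"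
      by (rule jnf_mv[OF lN A v])
    also have "\<dots> = (\<Sum>a<N. c a l * vec_index v a)"
      by (rule sum.cong) (auto simp: A_def l lN)
    finally show "(\<Sum>a<N. c a l * vec_index v a) = 0"
      using Av lN by simp
  qed
  ultimately show ?thesis by blast
qed

lemma L3_square:
  fixes U :: "nat \<Rightarrow> nat \<Rightarrow> complex"
  assumes "\<forall>a<N. \<forall>b<N. (\<Sum>c<N. cnj (U c a) * U c b) = (if a = b then 1 else 0)"
  shows "\<forall>a<N. \<forall>b<N. (\<Sum>c<N. U a c * cnj (U b c)) = (if a = b then 1 else 0)"
proof -
  define A where "A = Matrix.mat N N (\<lambda>(c,a). U c a)"
  define B where "B = Matrix.mat N N (\<lambda>(a,c). cnj (U c a))"
  have A: "A \<in> carrier_mat N N" and B: "B \<in> carrier_mat N N" unfolding A_def B_def by auto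
  have "B * A = 1\<^sub>m N"
  proof (rule eq_matI)
    fix a b assume "a < dim_row (1\<^sub>m N)" "b < dim_col (1\<^sub>m N)"
    hence ab: "a < N" "b < N" by auto
    have "(B * A) $$ (a,b) = (\<Sum>c<N. B $$ (a,c) * A $$ (c,b))"
      using ab A B by (simp add: scalar_prod_def lessThan_atLeast0)
    also have "\<dots> = (\<Sum>c<N. cnj (U c a) * U c b)"
      by (rule sum.cong) (auto simp: A_def B_def ab)
    also have "\<dots> = 1\<^sub>m N $$ (a,b)" using assms ab by simp
    finally show "(B * A) $$ (a,b) = 1\<^sub>m N $$ (a,b)" .
  qed (use A B in auto)
  from mat_mult_left_right_inverse[OF B A this] have AB: "A * B = 1\<^sub>m N" .
  show ?thesis
  proof (intro allI impI)
    fix a b assume ab: "a < N" "b < N"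
    have "(\<Sum>c<N. U a c * cnj (U b c)) = (\<Sum>c<N. A $$ (a,c) * B $$ (c,b))"
      by (rule sum.cong) (auto simp: A_def B_def ab)
    also have "\<dots> = (A * B) $$ (a,b)"
      using ab A B by (simp add: scalar_prod_def lessThan_atLeast0)
    also have "\<dots> = (if a = b then 1 else 0)" using AB ab by simp
    finally show "(\<Sum>c<N. U a c * cnj (U b c)) = (if a = b then 1 else 0)" .
  qed
qed

lemma conj_act_add: "conj_act r g (X + Y) = conj_act r g X + conj_act r g Y"
  unfolding conj_act_def by (simp add: matrix_add_ldistrib matrix_add_rdistrib')
lemma conj_act_msc: "conj_act r g (msc c X) = msc c (conj_act r g X)"
  unfolding conj_act_def by (simp add: msc_mult_left msc_mult_right)
lemma conj_act_zero[simp]: "conj_act r g 0 = 0"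
  using conj_act_msc[of r g 0 0] by simp
lemma conj_act_sum: "conj_act r g (sum f S) = (\<Sum>x\<in>S. conj_act r g (f x))"
  by (induct S rule: infinite_finite_induct) (auto simp: conj_act_add)

lemma madj_add: "madj (A + B) = madj A + madj B" by (simp add: cvec_eq_iff)
lemma madj_msc: "madj (msc c A) = msc (cnj c) (madj A)" by (simp add: cvec_eq_iff)
lemma madj_zero[simp]: "madj 0 = 0" by (simp add: cvec_eq_iff Finite_Cartesian_Product.zero_index)
lemma madj_sum: "madj (sum f S) = (\<Sum>x\<in>S. madj (f x))"
  by (induct S rule: infinite_finite_induct) (auto simp: madj_add)

context
  fixes G :: "('g, 'b) monoid_scheme" and r :: "'g \<Rightarrow> complex^'n::finite^'n"
  assumes rep: "unitary_rep G r"
begin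

lemma grp: "group G" using rep unfolding unitary_rep_def by simp

lemma r_unit: "g \<in> carrier G \<Longrightarrow> madj (r g) ** r g = Finite_Cartesian_Product.mat 1 \<and> r g ** madj (r g) = Finite_Cartesian_Product.mat 1"
  using rep unfolding unitary_rep_def unitary_mat_def by simp

lemma r_mult: "g \<in> carrier G \<Longrightarrow> h \<in> carrier G \<Longrightarrow> r (g \<otimes>\<^bsub>G\<^esub> h) = r g ** r h"
  using rep unfolding unitary_rep_def by simp

lemma r_one: "r \<one>\<^bsub>G\<^esub> = Finite_Cartesian_Product.mat 1"
proof -
  have o: "\<one>\<^bsub>G\<^esub> \<in> carrier G" using group.is_monoid[OF grp] by (simp add: monoid.one_closed)
  have "r \<one>\<^bsub>G\<^esub> = r \<one>\<^bsub>G\<^esub> ** r \<one>\<^bsub>G\<^esub>"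
    using r_mult[OF o o] o group.is_monoid[OF grp] by (simp add: monoid.l_one)
  hence "madj (r \<one>\<^bsub>G\<^esub>) ** r \<one>\<^bsub>G\<^esub> = madj (r \<one>\<^bsub>G\<^esub>) ** (r \<one>\<^bsub>G\<^esub> ** r \<one>\<^bsub>G\<^esub>)" by simp
  hence "Finite_Cartesian_Product.mat 1 = r \<one>\<^bsub>G\<^esub>"
    using r_unit[OF o] by (simp add: matrix_mul_assoc)
  thus ?thesis by simp
qed

lemma r_inv: assumes g: "g \<in> carrier G" shows "r (inv\<^bsub>G\<^esub> g) = madj (r g)"
proof -
  have ig: "inv\<^bsub>G\<^esub> g \<in> carrier G" using group.inv_closed[OF grp g] .
  have "r g ** r (inv\<^bsub>G\<^esub> g) = Finite_Cartesian_Product.mat 1"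
    using r_mult[OF g ig] group.r_inv[OF grp g] r_one by simp
  hence "madj (r g) ** (r g ** r (inv\<^bsub>G\<^esub> g)) = madj (r g)" by simp
  thus ?thesis using r_unit[OF g] by (simp add: matrix_mul_assoc)
qed

lemma conj_act_inv: "g \<in> carrier G \<Longrightarrow> conj_act r (inv\<^bsub>G\<^esub> g) X = madj (r g) ** X ** r g"
  unfolding conj_act_def by (simp add: r_inv)

lemma hs_conj_act: assumes g: "g \<in> carrier G"
  shows "hs (conj_act r g A) (conj_act r g B) = hs A B"
proof -
  have "hs (conj_act r g A) (conj_act r g B) = hs A (madj (r g) ** (r g ** B ** madj (r g)) ** r g)"
    unfolding conj_act_def by (rule hs_adj_id[symmetric])
  also have "madj (r g) ** (r g ** B ** madj (r g)) ** r g = (madj (r g) ** r g) ** B ** (madj (r g) ** r g)"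
    by (simp only: matrix_mul_assoc)
  also have "\<dots> = B" using r_unit[OF g] by simp
  finally show ?thesis .
qed

lemma HomG_comp: "S \<in> HomG G r \<Longrightarrow> T \<in> HomG G r \<Longrightarrow> (\<lambda>X. S (T X)) \<in> HomG G r"
  unfolding HomG_def clinear_map_def by auto

end

lemma clinear_zero: "clinear_map T \<Longrightarrow> T 0 = 0"
  unfolding clinear_map_def by (metis msc_0)
lemma clinear_sum: "clinear_map T \<Longrightarrow> T (sum f S) = (\<Sum>x\<in>S. T (f x))"
  by (induct S rule: infinite_finite_induct) (auto simp: clinear_zero, auto simp: clinear_map_def)
lemma clinear_lin: "clinear_map T \<Longrightarrow> T (\<Sum>x\<in>S. msc (c x) (f x)) = (\<Sum>x\<in>S. msc (c x) (T (f x)))"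
  by (simp add: clinear_sum) (simp add: clinear_map_def)


lemma sum_fiber:
  assumes "finite A" "finite T" "h ` T \<subseteq> A" "inj_on h T" "\<forall>p\<in>A. p \<notin> h ` T \<longrightarrow> f p = 0"
  shows "sum f A = (\<Sum>t\<in>T. f (h t))"
proof -
  have "sum f A = sum f (h ` T)"
    by (rule sum.mono_neutral_right) (use assms in auto)
  also have "\<dots> = (\<Sum>t\<in>T. f (h t))" using sum.reindex[OF assms(4)] by simp
  finally show ?thesis .
qed

lemma sum_delta_mult: "finite S \<Longrightarrow> k \<in> S \<Longrightarrow> (\<Sum>j\<in>S. (f::_\<Rightarrow>complex) j * (if k = j then 1 else 0)) = f k"
proof -
  assume "finite S" "k \<in> S"
  have "(\<Sum>j\<in>S. f j * (if k = j then 1 else 0)) = (\<Sum>j\<in>S. if k = j then f j else 0)"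
    by (rule sum.cong) auto
  thus ?thesis using \<open>finite S\<close> \<open>k \<in> S\<close> by simp
qed
lemma sum_delta_mult': "finite S \<Longrightarrow> k \<in> S \<Longrightarrow> (\<Sum>j\<in>S. (f::_\<Rightarrow>complex) j * (if j = k then 1 else 0)) = f k"
proof -
  assume "finite S" "k \<in> S"
  have "(\<Sum>j\<in>S. f j * (if j = k then 1 else 0)) = (\<Sum>j\<in>S. if k = j then f j else 0)"
    by (rule sum.cong) auto
  thus ?thesis using \<open>finite S\<close> \<open>k \<in> S\<close> by simp
qed

locale S15 =
  fixes G :: "('g, 'b) monoid_scheme"
    and r :: "'g \<Rightarrow> complex^'n::finite^'n"
    and Xi :: "'x set"
    and m d :: "'x \<Rightarrow> nat"
    and E :: "'x \<Rightarrow> nat \<Rightarrow> nat \<Rightarrow> complex^'n^'n"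
    and J :: "('x \<times> nat \<times> nat) set"
  assumes J_eq: "J = {(x, a, i). x \<in> Xi \<and> a \<in> {1..m x} \<and> i \<in> {1..d x}}"
  assumes rep: "unitary_rep G r"
    and fin: "finite Xi"
    and pos: "\<forall>x\<in>Xi. 1 \<le> m x \<and> 1 \<le> d x"
    and orth: "\<forall>(x, a, i)\<in>J. \<forall>(y, b, j)\<in>J.
                 hs (E x a i) (E y b j) = (if (x, a, i) = (y, b, j) then 1 else 0)"
    and span_all: "mspan J (\<lambda>(x, a, i). E x a i) = UNIV"
    and equiv: "\<forall>x\<in>Xi. \<forall>g\<in>carrier G. \<exists>C :: nat \<Rightarrow> nat \<Rightarrow> complex.
                 \<forall>a\<in>{1..m x}. \<forall>i\<in>{1..d x}.
                   conj_act r g (E x a i) = (\<Sum>j\<in>{1..d x}. msc (C j i) (E x a j))"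
    and irred: "\<forall>x\<in>Xi. irreducible_sub G r (mspan {1..d x} (E x 1))"
    and noniso: "\<forall>x\<in>Xi. \<forall>y\<in>Xi. x \<noteq> y \<longrightarrow>
                 \<not> iso_sub G r (mspan {1..d x} (E x 1)) (mspan {1..d y} (E y 1))"
begin

abbreviation eJ where "eJ \<equiv> (\<lambda>(x, a, i). E x a i)"

lemma J_Sigma: "J = Sigma Xi (\<lambda>x. {1..m x} \<times> {1..d x})"
  unfolding J_eq by auto
lemma finJ: "finite J" unfolding J_Sigma by (intro finite_SigmaI fin) auto
lemma inJ[simp]: "(x, a, i) \<in> J \<longleftrightarrow> x \<in> Xi \<and> a \<in> {1..m x} \<and> i \<in> {1..d x}"
  unfolding J_eq by auto
lemma one_m: "x \<in> Xi \<Longrightarrow> 1 \<in> {1..m x}" using pos by auto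
lemma one_d: "x \<in> Xi \<Longrightarrow> 1 \<in> {1..d x}" using pos by auto

lemma orthJ: assumes "p \<in> J" "q \<in> J" shows "hs (eJ p) (eJ q) = (if p = q then 1 else 0)"
proof -
  obtain x a i where p: "p = (x,a,i)" by (cases p)
  obtain y b j where q: "q = (y,b,j)" by (cases q)
  have h1: "\<forall>(y, b, j)\<in>J. hs (E x a i) (E y b j) = (if (x,a,i) = (y,b,j) then 1 else 0)"
    using bspec[OF orth assms(1)] unfolding p by (simp only: prod.case)
  have h2: "hs (E x a i) (E y b j) = (if (x,a,i) = (y,b,j) then 1 else 0)"
    using bspec[OF h1 assms(2)] unfolding q by (simp only: prod.case)
  show ?thesis using h2 unfolding p q by (simp only: prod.case)
qed

lemma ortho: "x \<in> Xi \<Longrightarrow> a \<in> {1..m x} \<Longrightarrow> i \<in> {1..d x} \<Longrightarrow>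
  y \<in> Xi \<Longrightarrow> b \<in> {1..m y} \<Longrightarrow> j \<in> {1..d y} \<Longrightarrow>
  hs (E x a i) (E y b j) = (if x = y \<and> a = b \<and> i = j then 1 else 0)"
  using orthJ[of "(x,a,i)" "(y,b,j)"] by (simp only: prod.case inJ prod.inject)

end

context S15 begin

lemma expand: "X = (\<Sum>p\<in>J. msc (hs (eJ p) X) (eJ p))"
proof -
  have "X \<in> mspan J eJ" using span_all by simp
  then obtain c where c: "X = (\<Sum>p\<in>J. msc (c p) (eJ p))" unfolding mspan_def by blast
  have "hs (eJ q) X = c q" if q: "q \<in> J" for q
  proof -
    have "hs (eJ q) X = (\<Sum>p\<in>J. c p * hs (eJ q) (eJ p))"
      unfolding c by (simp add: hs_sum_right hs_msc_right)
    also have "\<dots> = (\<Sum>p\<in>J. c p * (if q = p then 1 else 0))"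
      by (rule sum.cong) (auto simp: orthJ q)
    also have "\<dots> = c q" by (rule sum_delta_mult[OF finJ q])
    finally show ?thesis .
  qed
  hence "(\<Sum>p\<in>J. msc (hs (eJ p) X) (eJ p)) = (\<Sum>p\<in>J. msc (c p) (eJ p))"
    by (intro sum.cong) auto
  thus ?thesis using c by simp
qed

lemma coeff_eq: "(\<And>p. p \<in> J \<Longrightarrow> hs (eJ p) X = hs (eJ p) Y) \<Longrightarrow> X = Y"
  by (subst expand, subst (2) expand) (auto intro: sum.cong)

lemma coeff_eq3: "(\<And>x a i. x \<in> Xi \<Longrightarrow> a \<in> {1..m x} \<Longrightarrow> i \<in> {1..d x} \<Longrightarrow>
     hs (E x a i) X = hs (E x a i) Y) \<Longrightarrow> X = Y"
  by (rule coeff_eq) auto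

definition Cf where "Cf g x j i = hs (E x 1 j) (conj_act r g (E x 1 i))"

lemma rhoE: assumes g: "g \<in> carrier G" and x: "x \<in> Xi" and a: "a \<in> {1..m x}" and i: "i \<in> {1..d x}"
  shows "conj_act r g (E x a i) = (\<Sum>j\<in>{1..d x}. msc (Cf g x j i) (E x a j))"
proof -
  obtain C where C: "\<forall>a\<in>{1..m x}. \<forall>i\<in>{1..d x}.
                   conj_act r g (E x a i) = (\<Sum>j\<in>{1..d x}. msc (C j i) (E x a j))"
    using equiv x g by blast
  have "Cf g x k i = C k i" if k: "k \<in> {1..d x}" for k
  proof -
    have "Cf g x k i = (\<Sum>j\<in>{1..d x}. C j i * hs (E x 1 k) (E x 1 j))"
      unfolding Cf_def using C one_m[OF x] i by (simp add: hs_sum_right hs_msc_right)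
    also have "\<dots> = (\<Sum>j\<in>{1..d x}. C j i * (if k = j then 1 else 0))"
      by (rule sum.cong) (use ortho x one_m[OF x] k in auto)
    also have "\<dots> = C k i" by (rule sum_delta_mult) (use k in auto)
    finally show ?thesis .
  qed
  thus ?thesis using C a i by (auto intro: sum.cong)
qed

lemma hs_rhoE: assumes g: "g \<in> carrier G" and x: "x \<in> Xi" and a: "a \<in> {1..m x}" and i: "i \<in> {1..d x}"
  and y: "y \<in> Xi" and b: "b \<in> {1..m y}" and k: "k \<in> {1..d y}"
  shows "hs (E y b k) (conj_act r g (E x a i)) = (if y = x \<and> b = a then Cf g x k i else 0)"
proof -
  have "hs (E y b k) (conj_act r g (E x a i)) = (\<Sum>j\<in>{1..d x}. Cf g x j i * hs (E y b k) (E x a j))"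
    unfolding rhoE[OF g x a i] by (simp add: hs_sum_right hs_msc_right)
  also have "\<dots> = (\<Sum>j\<in>{1..d x}. Cf g x j i * (if y = x \<and> b = a \<and> k = j then 1 else 0))"
    by (rule sum.cong) (use ortho x a y b k in auto)
  also have "\<dots> = (if y = x \<and> b = a then Cf g x k i else 0)"
  proof (cases "y = x \<and> b = a")
    case True
    thus ?thesis using sum_delta_mult[of "{1..d x}" k "\<lambda>j. Cf g x j i"] k by simp
  next
    case False
    have A: "(\<Sum>j\<in>{1..d x}. Cf g x j i * (if y = x \<and> b = a \<and> k = j then 1 else 0)) = 0"
      by (rule sum.neutral) (use False in auto)
    have B: "(if y = x \<and> b = a then Cf g x k i else 0) = 0" using False by auto
    show ?thesis by (simp only: A B)
  qed
  finally show ?thesis .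
qed

lemma hs_rho: assumes g: "g \<in> carrier G" and x: "x \<in> Xi" and a: "a \<in> {1..m x}" and k: "k \<in> {1..d x}"
  shows "hs (E x a k) (conj_act r g X) = (\<Sum>i\<in>{1..d x}. Cf g x k i * hs (E x a i) X)"
proof -
  have "hs (E x a k) (conj_act r g X) =
      (\<Sum>p\<in>J. hs (eJ p) X * hs (E x a k) (conj_act r g (eJ p)))"
    by (subst expand[of X]) (simp add: conj_act_sum conj_act_msc hs_sum_right hs_msc_right)
  also have "\<dots> = (\<Sum>i\<in>{1..d x}. hs (eJ (x,a,i)) X * hs (E x a k) (conj_act r g (eJ (x,a,i))))"
  proof (rule sum_fiber[OF finJ])
    show "(\<lambda>i. (x, a, i)) ` {1..d x} \<subseteq> J" using x a by auto
    show "inj_on (\<lambda>i. (x, a, i)) {1..d x}" by (auto simp: inj_on_def)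
    show "\<forall>p\<in>J. p \<notin> (\<lambda>i. (x, a, i)) ` {1..d x} \<longrightarrow>
        hs (eJ p) X * hs (E x a k) (conj_act r g (eJ p)) = 0"
    proof (intro ballI impI)
      fix p assume p: "p \<in> J" "p \<notin> (\<lambda>i. (x, a, i)) ` {1..d x}"
      obtain y b i where pe: "p = (y,b,i)" by (cases p)
      have "\<not> (x = y \<and> a = b)" using p pe by auto
      thus "hs (eJ p) X * hs (E x a k) (conj_act r g (eJ p)) = 0"
        using hs_rhoE[OF g, of y b i x a k] p pe x a k by auto
    qed
  qed simp
  also have "\<dots> = (\<Sum>i\<in>{1..d x}. Cf g x k i * hs (E x a i) X)"
    by (rule sum.cong) (use hs_rhoE[OF g x a _ x a k] in auto)
  finally show ?thesis .
qed

lemma Cf_col_orth: assumes g: "g \<in> carrier G" and x: "x \<in> Xi" and k: "k \<in> {1..d x}" and j: "j \<in> {1..d x}"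
  shows "(\<Sum>i\<in>{1..d x}. cnj (Cf g x i k) * Cf g x i j) = (if k = j then 1 else 0)"
proof -
  have "hs (conj_act r g (E x 1 k)) (conj_act r g (E x 1 j)) = hs (E x 1 k) (E x 1 j)"
    by (rule hs_conj_act[OF rep g])
  also have "\<dots> = (if k = j then 1 else 0)" using ortho x one_m[OF x] k j by auto
  finally have 1: "hs (conj_act r g (E x 1 k)) (conj_act r g (E x 1 j)) = (if k = j then 1 else 0)" .
  have "hs (conj_act r g (E x 1 k)) (conj_act r g (E x 1 j)) =
     (\<Sum>i\<in>{1..d x}. cnj (Cf g x i k) * hs (E x 1 i) (conj_act r g (E x 1 j)))"
    unfolding rhoE[OF g x one_m[OF x] k] by (simp add: hs_sum_left hs_msc_left)
  also have "\<dots> = (\<Sum>i\<in>{1..d x}. cnj (Cf g x i k) * Cf g x i j)"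
    unfolding Cf_def ..
  finally show ?thesis using 1 by simp
qed

end

lemma PiU_lin: "clinear_map (PiU d E x a b)"
  unfolding clinear_map_def PiU_def
  by (simp add: hs_add_right msc_add_left sum.distrib hs_msc_right msc_sum msc_msc)

lemma TwirlU_lin: "clinear_map (TwirlU d E x a b)"
  unfolding clinear_map_def TwirlU_def
  by (simp add: matrix_add_ldistrib matrix_add_rdistrib' sum.distrib msc_mult_left msc_mult_right msc_sum)

lemma bilin_expand: "(\<Sum>j\<in>S. msc (\<alpha> j) (M j)) ** X ** (\<Sum>k\<in>T. msc (\<beta> k) (N k)) =
   (\<Sum>j\<in>S. \<Sum>k\<in>T. msc (\<alpha> j * \<beta> k) (M j ** X ** (N k :: 'n::finite cmat)))"
proof -
  have "(\<Sum>j\<in>S. msc (\<alpha> j) (M j)) ** X ** (\<Sum>k\<in>T. msc (\<beta> k) (N k)) =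
     (\<Sum>k\<in>T. \<Sum>j\<in>S. msc (\<beta> k * \<alpha> j) (M j ** X ** N k))"
    by (simp add: sum_mult_left sum_mult_right msc_mult_left msc_mult_right msc_msc msc_sum)
  also have "\<dots> = (\<Sum>j\<in>S. \<Sum>k\<in>T. msc (\<alpha> j * \<beta> k) (M j ** X ** (N k :: 'n::finite cmat)))"
    by (subst sum.swap) (simp add: mult.commute)
  finally show ?thesis .
qed

lemma sum_delta_msc: "finite S \<Longrightarrow> (\<Sum>j\<in>S. \<Sum>k\<in>S. msc (if j = k then 1 else 0) (M j k)) = (\<Sum>j\<in>S. (M j j :: 'n::finite cmat))"
proof -
  assume S: "finite S"
  have "(\<Sum>k\<in>S. msc (if j = k then 1 else 0) (M j k)) = M j j" if j: "j \<in> S" for j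
  proof -
    have "(\<Sum>k\<in>S. msc (if j = k then 1 else 0) (M j k)) = (\<Sum>k\<in>S. if j = k then M j k else 0)"
      by (rule sum.cong) auto
    thus ?thesis using S j by simp
  qed
  thus ?thesis by (rule sum.cong[OF refl])
qed

context S15 begin

lemma PiU_equiv: assumes x: "x \<in> Xi" and a: "a \<in> {1..m x}" and b: "b \<in> {1..m x}" and g: "g \<in> carrier G"
  shows "PiU d E x a b (conj_act r g X) = conj_act r g (PiU d E x a b X)"
proof -
  have "PiU d E x a b (conj_act r g X) = (\<Sum>j\<in>{1..d x}. msc (\<Sum>i\<in>{1..d x}. Cf g x j i * hs (E x a i) X) (E x b j))"
    unfolding PiU_def by (rule sum.cong) (use hs_rho[OF g x a] in auto)
  also have "\<dots> = (\<Sum>j\<in>{1..d x}. \<Sum>i\<in>{1..d x}. msc (hs (E x a i) X * Cf g x j i) (E x b j))"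
    by (simp add: msc_sum_left mult.commute)
  also have "\<dots> = (\<Sum>i\<in>{1..d x}. \<Sum>j\<in>{1..d x}. msc (hs (E x a i) X * Cf g x j i) (E x b j))"
    by (rule sum.swap)
  also have "\<dots> = (\<Sum>i\<in>{1..d x}. msc (hs (E x a i) X) (conj_act r g (E x b i)))"
    by (rule sum.cong) (use rhoE[OF g x b] in \<open>auto simp: msc_sum msc_msc\<close>)
  also have "\<dots> = conj_act r g (PiU d E x a b X)"
    unfolding PiU_def by (simp add: conj_act_sum conj_act_msc)
  finally show ?thesis .
qed

lemma Cf_inv: assumes g: "g \<in> carrier G" and x: "x \<in> Xi"
  shows "Cf (inv\<^bsub>G\<^esub> g) x j i = cnj (Cf g x i j)"
proof -
  have "Cf (inv\<^bsub>G\<^esub> g) x j i = hs (E x 1 j) (madj (r g) ** E x 1 i ** r g)"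
    unfolding Cf_def conj_act_inv[OF rep g] ..
  also have "\<dots> = hs (conj_act r g (E x 1 j)) (E x 1 i)"
    unfolding hs_adj_id conj_act_def ..
  also have "\<dots> = cnj (Cf g x i j)" unfolding Cf_def hs_cnj ..
  finally show ?thesis .
qed

lemma TwirlU_equiv: assumes x: "x \<in> Xi" and a: "a \<in> {1..m x}" and b: "b \<in> {1..m x}" and g: "g \<in> carrier G"
  shows "TwirlU d E x a b (conj_act r g X) = conj_act r g (TwirlU d E x a b X)"
proof -
  define R where "R = r g"
  define g' where "g' = inv\<^bsub>G\<^esub> g"
  have g': "g' \<in> carrier G" unfolding g'_def using group.inv_closed[OF grp[OF rep] g] .
  have RR: "madj R ** R = Finite_Cartesian_Product.mat 1" "R ** madj R = Finite_Cartesian_Product.mat 1"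
    using r_unit[OF rep g] unfolding R_def by auto
  have c1: "A ** madj R ** R = A" for A
    by (simp add: matrix_mul_assoc[symmetric] RR)
  have c2: "A ** R ** madj R = A" for A
    by (simp add: matrix_mul_assoc[symmetric] RR)
  define F where "F c i = conj_act r g' (E x c i)" for c i
  have F: "F c i = madj R ** E x c i ** R" for c i
    unfolding F_def g'_def R_def by (rule conj_act_inv[OF rep g])
  have EF: "E x c i = R ** F c i ** madj R" for c i
    unfolding F by (simp add: matrix_mul_assoc c1 c2 RR)
  have step2: "madj (E x a i) ** (R ** X ** madj R) ** E x b i = R ** (madj (F a i) ** X ** F b i) ** madj R" for i
    unfolding EF[of a i] EF[of b i] by (simp add: madj_mult matrix_mul_assoc c1 c2)
  have lhs: "TwirlU d E x a b (conj_act r g X) = R ** (\<Sum>i\<in>{1..d x}. madj (F a i) ** X ** F b i) ** madj R"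
    unfolding TwirlU_def conj_act_def R_def[symmetric] step2
    by (simp add: sum_mult_left sum_mult_right)
  have D: "F c i = (\<Sum>j\<in>{1..d x}. msc (cnj (Cf g x i j)) (E x c j))" if c: "c \<in> {1..m x}" and i: "i \<in> {1..d x}" for c i
    unfolding F_def rhoE[OF g' x c i] by (rule sum.cong) (auto simp: g'_def Cf_inv[OF g x])
  have "(\<Sum>i\<in>{1..d x}. madj (F a i) ** X ** F b i) =
     (\<Sum>i\<in>{1..d x}. \<Sum>j\<in>{1..d x}. \<Sum>k\<in>{1..d x}. msc (Cf g x i j * cnj (Cf g x i k)) (madj (E x a j) ** X ** E x b k))"
  proof (rule sum.cong[OF refl])
    fix i assume i: "i \<in> {1..d x}"
    show "madj (F a i) ** X ** F b i = (\<Sum>j\<in>{1..d x}. \<Sum>k\<in>{1..d x}. msc (Cf g x i j * cnj (Cf g x i k)) (madj (E x a j) ** X ** E x b k))"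
      unfolding D[OF a i] D[OF b i] madj_sum madj_msc complex_cnj_cnj bilin_expand ..
  qed
  also have "\<dots> = (\<Sum>j\<in>{1..d x}. \<Sum>k\<in>{1..d x}. \<Sum>i\<in>{1..d x}. msc (Cf g x i j * cnj (Cf g x i k)) (madj (E x a j) ** X ** E x b k))"
    by (subst sum.swap) (rule sum.cong[OF refl], rule sum.swap)
  also have "\<dots> = (\<Sum>j\<in>{1..d x}. \<Sum>k\<in>{1..d x}. msc (if j = k then 1 else 0) (madj (E x a j) ** X ** E x b k))"
  proof (intro sum.cong[OF refl])
    fix j k assume j: "j \<in> {1..d x}" and k: "k \<in> {1..d x}"
    have "(\<Sum>i\<in>{1..d x}. Cf g x i j * cnj (Cf g x i k)) = (if k = j then 1 else 0)"
      using Cf_col_orth[OF g x k j] by (simp add: mult.commute)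
    thus "(\<Sum>i\<in>{1..d x}. msc (Cf g x i j * cnj (Cf g x i k)) (madj (E x a j) ** X ** E x b k)) =
        msc (if j = k then 1 else 0) (madj (E x a j) ** X ** E x b k)"
      by (simp add: msc_sum_left[symmetric] eq_commute[of k j])
  qed
  also have "\<dots> = (\<Sum>j\<in>{1..d x}. madj (E x a j) ** X ** E x b j)"
    by (rule sum_delta_msc) simp
  finally have fin: "(\<Sum>i\<in>{1..d x}. madj (F a i) ** X ** F b i) = (\<Sum>j\<in>{1..d x}. madj (E x a j) ** X ** E x b j)" .
  have T: "TwirlU d E x a b X = (\<Sum>j\<in>{1..d x}. madj (E x a j) ** X ** E x b j)"
    by (simp add: TwirlU_def)
  show ?thesis unfolding conj_act_def[of r g "TwirlU d E x a b X"] R_def[symmetric] T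
    using lhs fin by (simp add: conj_act_def R_def)
qed

lemma PiU_HomG: "x \<in> Xi \<Longrightarrow> a \<in> {1..m x} \<Longrightarrow> b \<in> {1..m x} \<Longrightarrow> PiU d E x a b \<in> HomG G r"
  unfolding HomG_def using PiU_lin PiU_equiv by auto
lemma TwirlU_HomG: "x \<in> Xi \<Longrightarrow> a \<in> {1..m x} \<Longrightarrow> b \<in> {1..m x} \<Longrightarrow> TwirlU d E x a b \<in> HomG G r"
  unfolding HomG_def using TwirlU_lin TwirlU_equiv by auto

end

lemma msc_cancel: "A + msc (- \<mu>) B = 0 \<Longrightarrow> A = msc \<mu> (B::'n::finite cmat)"
  unfolding cvec_eq_iff by (auto simp: msc_def Finite_Cartesian_Product.zero_index algebra_simps) 

lemma sum_shift1: "(\<Sum>i\<in>{1..n::nat}. f (i - 1)) = (\<Sum>l<n. (f l :: complex))"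
  by (induct n) (auto simp: atLeastAtMostSuc_conv lessThan_Suc add.commute)

lemma HomG_shift: assumes "T \<in> HomG G r" shows "(\<lambda>X. T X + msc c X) \<in> HomG G r"
  using assms unfolding HomG_def clinear_map_def
  by (auto simp: msc_add msc_msc mult.commute conj_act_add conj_act_msc)

context S15 begin

abbreviation W where "W x \<equiv> mspan {1..d x} (E x 1)"

lemma W_inv: "x \<in> Xi \<Longrightarrow> invariant_sub G r (W x)"
  using irred unfolding irreducible_sub_def by auto
lemma W_sub: "x \<in> Xi \<Longrightarrow> msubspace (W x)"
  using W_inv unfolding invariant_sub_def by auto
lemma W_0: "x \<in> Xi \<Longrightarrow> 0 \<in> W x" using W_sub unfolding msubspace_def by auto
lemma W_add: "x \<in> Xi \<Longrightarrow> X \<in> W x \<Longrightarrow> Y \<in> W x \<Longrightarrow> X + Y \<in> W x"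
  using W_sub unfolding msubspace_def by auto
lemma W_msc: "x \<in> Xi \<Longrightarrow> X \<in> W x \<Longrightarrow> msc c X \<in> W x"
  using W_sub unfolding msubspace_def by auto
lemma W_conj: "x \<in> Xi \<Longrightarrow> g \<in> carrier G \<Longrightarrow> X \<in> W x \<Longrightarrow> conj_act r g X \<in> W x"
  using W_inv unfolding invariant_sub_def by auto
lemma W_ne: "x \<in> Xi \<Longrightarrow> \<exists>X\<in>W x. X \<noteq> 0"
  using irred W_0 unfolding irreducible_sub_def by blast
lemma W_max: "x \<in> Xi \<Longrightarrow> K \<subseteq> W x \<Longrightarrow> invariant_sub G r K \<Longrightarrow> K = {0} \<or> K = W x"
  using irred unfolding irreducible_sub_def by blast
lemma W_intro: "(\<Sum>i\<in>{1..d x}. msc (c i) (E x 1 i)) \<in> W x"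
  unfolding mspan_def by blast

lemma W_expand: assumes x: "x \<in> Xi" and Y: "Y \<in> W x"
  shows "Y = (\<Sum>j\<in>{1..d x}. msc (hs (E x 1 j) Y) (E x 1 j))"
proof -
  obtain c where c: "Y = (\<Sum>i\<in>{1..d x}. msc (c i) (E x 1 i))" using Y unfolding mspan_def by blast
  have "hs (E x 1 j) Y = c j" if j: "j \<in> {1..d x}" for j
  proof -
    have "hs (E x 1 j) Y = (\<Sum>i\<in>{1..d x}. c i * hs (E x 1 j) (E x 1 i))"
      unfolding c by (simp add: hs_sum_right hs_msc_right)
    also have "\<dots> = (\<Sum>i\<in>{1..d x}. c i * (if j = i then 1 else 0))"
      by (rule sum.cong) (use ortho x one_m[OF x] j in auto)
    also have "\<dots> = c j" by (rule sum_delta_mult) (use j in auto)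
    finally show ?thesis .
  qed
  hence "(\<Sum>j\<in>{1..d x}. msc (hs (E x 1 j) Y) (E x 1 j)) = (\<Sum>i\<in>{1..d x}. msc (c i) (E x 1 i))"
    by (intro sum.cong) auto
  thus ?thesis using c by simp
qed

lemma W_coeff_eq: "x \<in> Xi \<Longrightarrow> Y \<in> W x \<Longrightarrow> Z \<in> W x \<Longrightarrow>
  (\<And>j. j \<in> {1..d x} \<Longrightarrow> hs (E x 1 j) Y = hs (E x 1 j) Z) \<Longrightarrow> Y = Z"
  by (subst W_expand, assumption+, subst (2) W_expand, assumption+) (auto intro: sum.cong)

lemma E_in_W: assumes x: "x \<in> Xi" and i: "i \<in> {1..d x}" shows "E x 1 i \<in> W x"
proof -
  have "(\<Sum>j\<in>{1..d x}. msc (if j = i then 1 else 0) (E x 1 j)) = E x 1 i"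
  proof -
    have "(\<Sum>j\<in>{1..d x}. msc (if j = i then 1 else 0) (E x 1 j)) = (\<Sum>j\<in>{1..d x}. if i = j then E x 1 j else 0)"
      by (rule sum.cong) auto
    thus ?thesis using i by simp
  qed
  thus ?thesis using W_intro[of "\<lambda>j. if j = i then 1 else 0" x] by simp
qed

lemma HomG_lin: "T \<in> HomG G r \<Longrightarrow> clinear_map T" unfolding HomG_def by auto
lemma HomG_eq: "T \<in> HomG G r \<Longrightarrow> g \<in> carrier G \<Longrightarrow> T (conj_act r g X) = conj_act r g (T X)"
  unfolding HomG_def by auto

lemma schur_kernel: assumes T: "T \<in> HomG G r" and x: "x \<in> Xi" and X0: "X0 \<in> W x" "X0 \<noteq> 0" "T X0 = 0"
  shows "\<forall>X\<in>W x. T X = 0"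
proof -
  define K where "K = {X \<in> W x. T X = 0}"
  have lin: "clinear_map T" using HomG_lin[OF T] .
  have "invariant_sub G r K"
    unfolding invariant_sub_def msubspace_def K_def
    using W_0[OF x] W_add[OF x] W_msc[OF x] W_conj[OF x] clinear_zero[OF lin] HomG_eq[OF T] lin
    by (auto simp: clinear_map_def)
  moreover have "K \<subseteq> W x" unfolding K_def by auto
  ultimately have "K = {0} \<or> K = W x" using W_max[OF x] by blast
  moreover have "X0 \<in> K" using X0 unfolding K_def by auto
  ultimately have "K = W x" using X0 by auto
  thus ?thesis unfolding K_def by auto
qed

lemma schur_inj: assumes T: "T \<in> HomG G r" and x: "x \<in> Xi" and y: "y \<in> Xi"
  and into: "\<forall>X\<in>W x. T X \<in> W y" and inj: "\<forall>X\<in>W x. T X = 0 \<longrightarrow> X = 0"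
  shows "x = y"
proof (rule ccontr)
  assume xy: "x \<noteq> y"
  have lin: "clinear_map T" using HomG_lin[OF T] .
  define I where "I = T ` W x"
  have "invariant_sub G r I"
    unfolding invariant_sub_def msubspace_def I_def
  proof (intro conjI ballI allI)
    show "0 \<in> T ` W x" using W_0[OF x] clinear_zero[OF lin] by (metis image_eqI)
  next
    fix A B assume "A \<in> T ` W x" "B \<in> T ` W x"
    then obtain X Y where "X \<in> W x" "Y \<in> W x" "A = T X" "B = T Y" by blast
    thus "A + B \<in> T ` W x" using W_add[OF x] lin unfolding clinear_map_def by (metis image_eqI)
  next
    fix c A assume "A \<in> T ` W x"
    then obtain X where "X \<in> W x" "A = T X" by blast
    thus "msc c A \<in> T ` W x" using W_msc[OF x] lin unfolding clinear_map_def by (metis image_eqI)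
  next
    fix g A assume g: "g \<in> carrier G" and "A \<in> T ` W x"
    then obtain X where "X \<in> W x" "A = T X" by blast
    thus "conj_act r g A \<in> T ` W x" using W_conj[OF x g] HomG_eq[OF T g] by (metis image_eqI)
  qed
  moreover have "I \<subseteq> W y" using into unfolding I_def by auto
  ultimately have "I = {0} \<or> I = W y" using W_max[OF y] by blast
  moreover obtain X where "X \<in> W x" "X \<noteq> 0" using W_ne[OF x] by blast
  hence "T X \<in> I" "T X \<noteq> 0" using inj unfolding I_def by auto
  ultimately have IW: "I = W y" by auto
  have "inj_on T (W x)"
  proof (rule inj_onI)
    fix X Y assume X: "X \<in> W x" and Y: "Y \<in> W x" and e: "T X = T Y"
    have "T (X + msc (-1) Y) = T X + msc (-1) (T Y)" using lin unfolding clinear_map_def by simp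
    also have "\<dots> = 0" unfolding e by (rule msc_minus)
    finally have "X + msc (-1) Y = 0" using inj W_add[OF x X W_msc[OF x Y]] by blast
    thus "X = Y" using msc_cancel[of X 1 Y] by simp
  qed
  hence "bij_betw T (W x) (W y)" using IW unfolding I_def bij_betw_def by simp
  hence "iso_sub G r (W x) (W y)" unfolding iso_sub_def using lin HomG_eq[OF T] by blast
  thus False using noniso x y xy by blast
qed

lemma schur_eigen: assumes lin: "clinear_map T" and x: "x \<in> Xi" and into: "\<forall>X\<in>W x. T X \<in> W x"
  shows "\<exists>\<mu> X. X \<in> W x \<and> X \<noteq> 0 \<and> T X = msc \<mu> X"
proof -
  define M where "M k l = hs (E x 1 (k+1)) (T (E x 1 (l+1)))" for k l
  have "d x > 0" using pos x by auto
  from L1_eigen[OF this, of M] obtain \<mu> v where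
    v0: "\<exists>k<d x. v k \<noteq> 0" and ev: "\<forall>k<d x. (\<Sum>l<d x. M k l * v l) = \<mu> * v k" by blast
  define X where "X = (\<Sum>i\<in>{1..d x}. msc (v (i - 1)) (E x 1 i))"
  have XW: "X \<in> W x" unfolding X_def by (rule W_intro)
  have hX: "hs (E x 1 k) X = v (k - 1)" if k: "k \<in> {1..d x}" for k
  proof -
    have "hs (E x 1 k) X = (\<Sum>i\<in>{1..d x}. v (i - 1) * hs (E x 1 k) (E x 1 i))"
      unfolding X_def by (simp add: hs_sum_right hs_msc_right)
    also have "\<dots> = (\<Sum>i\<in>{1..d x}. v (i - 1) * (if k = i then 1 else 0))"
      by (rule sum.cong) (use ortho x one_m[OF x] k in auto)
    also have "\<dots> = v (k - 1)" by (rule sum_delta_mult[where f="\<lambda>i. v (i - 1)"]) (use k in auto)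
    finally show ?thesis .
  qed
  have "X \<noteq> 0"
  proof
    assume "X = 0"
    from v0 obtain k where k: "k < d x" "v k \<noteq> 0" by blast
    have "hs (E x 1 (k+1)) X = v k" using hX[of "k+1"] k by auto
    with \<open>X = 0\<close> k show False by simp
  qed
  moreover have "T X = msc \<mu> X"
  proof (rule W_coeff_eq[OF x])
    show "T X \<in> W x" using into XW by blast
    show "msc \<mu> X \<in> W x" using W_msc[OF x XW] .
    fix k assume k: "k \<in> {1..d x}"
    have "hs (E x 1 k) (T X) = (\<Sum>i\<in>{1..d x}. v (i - 1) * hs (E x 1 k) (T (E x 1 i)))"
      unfolding X_def clinear_lin[OF lin] by (simp add: hs_sum_right hs_msc_right)
    also have "\<dots> = (\<Sum>i\<in>{1..d x}. (\<lambda>l. M (k - 1) l * v l) (i - 1))"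
      by (rule sum.cong) (use k in \<open>auto simp: M_def mult.commute\<close>)
    also have "\<dots> = (\<Sum>l<d x. M (k - 1) l * v l)" by (rule sum_shift1)
    also have "\<dots> = \<mu> * v (k - 1)" using ev k by auto
    also have "\<dots> = hs (E x 1 k) (msc \<mu> X)" using hX[OF k] by (simp add: hs_msc_right)
    finally show "hs (E x 1 k) (T X) = hs (E x 1 k) (msc \<mu> X)" .
  qed
  ultimately show ?thesis using XW by blast
qed

lemma schur_ne: assumes T: "T \<in> HomG G r" and x: "x \<in> Xi" and y: "y \<in> Xi" and xy: "x \<noteq> y"
  and into: "\<forall>X\<in>W x. T X \<in> W y"
  shows "\<forall>X\<in>W x. T X = 0"
proof (cases "\<exists>X0\<in>W x. X0 \<noteq> 0 \<and> T X0 = 0")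
  case True
  then obtain X0 where "X0 \<in> W x" "X0 \<noteq> 0" "T X0 = 0" by blast
  thus ?thesis using schur_kernel[OF T x] by blast
next
  case False
  hence "\<forall>X\<in>W x. T X = 0 \<longrightarrow> X = 0" by blast
  with schur_inj[OF T x y into] xy show ?thesis by blast
qed

lemma schur_eq: assumes T: "T \<in> HomG G r" and x: "x \<in> Xi" and into: "\<forall>X\<in>W x. T X \<in> W x"
  shows "\<exists>\<mu>. \<forall>X\<in>W x. T X = msc \<mu> X"
proof -
  obtain \<mu> X0 where X0: "X0 \<in> W x" "X0 \<noteq> 0" "T X0 = msc \<mu> X0"
    using schur_eigen[OF HomG_lin[OF T] x into] by blast
  define T' where "T' = (\<lambda>X. T X + msc (-\<mu>) X)"
  have T': "T' \<in> HomG G r" unfolding T'_def by (rule HomG_shift[OF T])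
  have "T' X0 = 0" unfolding T'_def X0(3) by (simp add: cvec_eq_iff msc_def Finite_Cartesian_Product.zero_index)
  hence "\<forall>X\<in>W x. T' X = 0" using schur_kernel[OF T' x X0(1,2)] by blast
  hence "\<forall>X\<in>W x. T X = msc \<mu> X" unfolding T'_def using msc_cancel by blast
  thus ?thesis by blast
qed

end

lemma idx3_mem[simp]: "(x, a, b) \<in> idx3 Xi m \<longleftrightarrow> x \<in> Xi \<and> a \<in> {1..m x} \<and> b \<in> {1..m x}"
  unfolding idx3_def by auto
lemma idx3_fin: "finite Xi \<Longrightarrow> finite (idx3 Xi m)"
proof -
  assume "finite Xi"
  have "idx3 Xi m = Sigma Xi (\<lambda>x. {1..m x} \<times> {1..m x})" unfolding idx3_def by auto
  thus ?thesis using \<open>finite Xi\<close> by (simp add: finite_SigmaI)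
qed

context S15 begin

lemma PiU_E: assumes "x \<in> Xi" "a' \<in> {1..m x}" "b \<in> {1..m x}" "y \<in> Xi" "c \<in> {1..m y}" "i \<in> {1..d y}"
  shows "PiU d E x a' b (E y c i) = (if y = x \<and> c = a' then E x b i else 0)"
proof -
  have "PiU d E x a' b (E y c i) = (\<Sum>j\<in>{1..d x}. msc (if x = y \<and> a' = c \<and> j = i then 1 else 0) (E x b j))"
    unfolding PiU_def by (rule sum.cong) (use ortho assms in auto)
  also have "\<dots> = (if y = x \<and> c = a' then E x b i else 0)"
  proof (cases "y = x \<and> c = a'")
    case True
    have "(\<Sum>j\<in>{1..d x}. msc (if x = y \<and> a' = c \<and> j = i then 1 else 0) (E x b j)) =
        (\<Sum>j\<in>{1..d x}. if i = j then E x b j else 0)"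
      by (rule sum.cong) (use True in auto)
    thus ?thesis using True assms by simp
  next
    case False
    have "(\<Sum>j\<in>{1..d x}. msc (if x = y \<and> a' = c \<and> j = i then 1 else 0) (E x b j)) = 0"
      by (rule sum.neutral) (use False in auto)
    thus ?thesis using False by auto
  qed
  finally show ?thesis .
qed

lemma hs_PiU_gen: assumes x: "x \<in> Xi" and a: "a \<in> {1..m x}" and b: "b \<in> {1..m x}"
  and y: "y \<in> Xi" and c: "c \<in> {1..m y}" and k: "k \<in> {1..d y}"
  shows "hs (E y c k) (PiU d E x a b X) = (if y = x \<and> c = b then hs (E x a k) X else 0)"
proof -
  have "hs (E y c k) (PiU d E x a b X) = (\<Sum>j\<in>{1..d x}. hs (E x a j) X * (if y = x \<and> c = b \<and> k = j then 1 else 0))"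
    unfolding PiU_def by (simp add: hs_sum_right hs_msc_right) (rule sum.cong, use ortho x b y c k in auto)
  also have "\<dots> = (if y = x \<and> c = b then hs (E x a k) X else 0)"
  proof (cases "y = x \<and> c = b")
    case True
    thus ?thesis using sum_delta_mult[of "{1..d x}" k "\<lambda>j. hs (E x a j) X"] k by simp
  next
    case False
    have A: "(\<Sum>j\<in>{1..d x}. hs (E x a j) X * (if y = x \<and> c = b \<and> k = j then 1 else 0)) = 0"
      by (rule sum.neutral) (use False in auto)
    have B: "(if y = x \<and> c = b then hs (E x a k) X else 0) = 0" using False by auto
    show ?thesis by (simp only: A B)
  qed
  finally show ?thesis .
qed

lemma PiU_into: "PiU d E y b 1 Z \<in> W y"
  unfolding PiU_def by (rule W_intro)

definition lam where "lam T x a b = hs (E x b 1) (T (E x a 1))"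

lemma coefT: assumes T: "T \<in> HomG G r" and x: "x \<in> Xi" and a: "a \<in> {1..m x}" and i: "i \<in> {1..d x}"
  and y: "y \<in> Xi" and b: "b \<in> {1..m y}" and k: "k \<in> {1..d y}"
  shows "hs (E y b k) (T (E x a i)) = (if y = x \<and> k = i then lam T x a b else 0)"
proof -
  define S where "S = (\<lambda>X. PiU d E y b 1 (T (PiU d E x 1 a X)))"
  have S: "S \<in> HomG G r" unfolding S_def
    by (rule HomG_comp[OF rep PiU_HomG[OF y b one_m[OF y]] HomG_comp[OF rep T PiU_HomG[OF x one_m[OF x] a]]])
  have into: "\<forall>X\<in>W x. S X \<in> W y" unfolding S_def using PiU_into by auto
  have SE: "S (E x 1 i') = PiU d E y b 1 (T (E x a i'))" if "i' \<in> {1..d x}" for i'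
    unfolding S_def using PiU_E[OF x one_m[OF x] a x one_m[OF x] that] by simp
  have hsS: "hs (E y 1 k') (S (E x 1 i')) = hs (E y b k') (T (E x a i'))" if "i' \<in> {1..d x}" "k' \<in> {1..d y}" for i' k'
    unfolding SE[OF that(1)] using hs_PiU_gen[OF y b one_m[OF y] y one_m[OF y] that(2)] by simp
  show ?thesis
  proof (cases "y = x")
    case False
    have "S (E x 1 i) = 0" using schur_ne[OF S x y _ into] False E_in_W[OF x i] by auto
    thus ?thesis using hsS[OF i k] False by simp
  next
    case True
    obtain \<mu> where mu: "\<forall>X\<in>W x. S X = msc \<mu> X" using schur_eq[OF S x] into True by blast
    have gen: "hs (E x b k') (T (E x a i')) = \<mu> * (if k' = i' then 1 else 0)"
      if i': "i' \<in> {1..d x}" and k': "k' \<in> {1..d x}" for i' k'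
    proof -
      have "hs (E x b k') (T (E x a i')) = hs (E x 1 k') (S (E x 1 i'))" using hsS[OF i', of k'] True k' by simp
      also have "\<dots> = \<mu> * hs (E x 1 k') (E x 1 i')" using mu E_in_W[OF x i'] by (simp add: hs_msc_right)
      also have "\<dots> = \<mu> * (if k' = i' then 1 else 0)" using ortho x one_m[OF x] i' k' by auto
      finally show ?thesis .
    qed
    have "lam T x a b = \<mu>" unfolding lam_def using gen[OF one_d[OF x] one_d[OF x]] by simp
    thus ?thesis using gen[OF i] k True by simp
  qed
qed

definition PiQ where "PiQ q = (case q of (x, a, b) \<Rightarrow> PiU d E x a b)"
definition lamQ where "lamQ T q = (case q of (x, a, b) \<Rightarrow> lam T x a b)"

lemma HomG_span: assumes T: "T \<in> HomG G r"
  shows "T X = (\<Sum>q\<in>idx3 Xi m. msc (lamQ T q) (PiQ q X))"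
proof (rule coeff_eq3)
  fix y c k assume y: "y \<in> Xi" and c: "c \<in> {1..m y}" and k: "k \<in> {1..d y}"
  have lin: "clinear_map T" using HomG_lin[OF T] .
  have "hs (E y c k) (T X) = (\<Sum>p\<in>J. hs (eJ p) X * hs (E y c k) (T (eJ p)))"
    by (subst expand[of X]) (simp add: clinear_lin[OF lin] hs_sum_right hs_msc_right)
  also have "\<dots> = (\<Sum>a\<in>{1..m y}. hs (eJ (y,a,k)) X * hs (E y c k) (T (eJ (y,a,k))))"
  proof (rule sum_fiber[OF finJ])
    show "(\<lambda>a. (y, a, k)) ` {1..m y} \<subseteq> J" using y k by auto
    show "inj_on (\<lambda>a. (y, a, k)) {1..m y}" by (auto simp: inj_on_def)
    show "\<forall>p\<in>J. p \<notin> (\<lambda>a. (y, a, k)) ` {1..m y} \<longrightarrow> hs (eJ p) X * hs (E y c k) (T (eJ p)) = 0"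
    proof (intro ballI impI)
      fix p assume p: "p \<in> J" "p \<notin> (\<lambda>a. (y, a, k)) ` {1..m y}"
      obtain x a i where pe: "p = (x,a,i)" by (cases p)
      have "\<not> (y = x \<and> k = i)" using p pe by auto
      thus "hs (eJ p) X * hs (E y c k) (T (eJ p)) = 0"
        using coefT[OF T, of x a i y c k] p pe y c k by auto
    qed
  qed simp
  also have "\<dots> = (\<Sum>a\<in>{1..m y}. lam T y a c * hs (E y a k) X)"
    by (rule sum.cong) (use coefT[OF T y _ k y c k] in auto)
  also have "\<dots> = (\<Sum>a\<in>{1..m y}. (\<lambda>q. lamQ T q * hs (E y c k) (PiQ q X)) ((\<lambda>a. (y, a, c)) a))"
  proof (rule sum.cong[OF refl])
    fix a assume a: "a \<in> {1..m y}"
    show "lam T y a c * hs (E y a k) X = (\<lambda>q. lamQ T q * hs (E y c k) (PiQ q X)) ((\<lambda>a. (y, a, c)) a)"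
      using hs_PiU_gen[OF y a c y c k, of X] by (simp add: lamQ_def PiQ_def)
  qed
  also have "\<dots> = (\<Sum>q\<in>idx3 Xi m. lamQ T q * hs (E y c k) (PiQ q X))"
  proof (rule sum_fiber[of "idx3 Xi m" "{1..m y}" "\<lambda>a. (y, a, c)" "\<lambda>q. lamQ T q * hs (E y c k) (PiQ q X)", symmetric])
    show "finite (idx3 Xi m)" by (rule idx3_fin[OF fin])
    show "finite {1..m y}" by simp
    show "(\<lambda>a. (y, a, c)) ` {1..m y} \<subseteq> idx3 Xi m" using y c by auto
    show "inj_on (\<lambda>a. (y, a, c)) {1..m y}" by (auto simp: inj_on_def)
    show "\<forall>q\<in>idx3 Xi m. q \<notin> (\<lambda>a. (y, a, c)) ` {1..m y} \<longrightarrow> lamQ T q * hs (E y c k) (PiQ q X) = 0"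
    proof (intro ballI impI)
      fix q assume q: "q \<in> idx3 Xi m" "q \<notin> (\<lambda>a. (y, a, c)) ` {1..m y}"
      obtain x a b where qe: "q = (x,a,b)" by (cases q)
      have "\<not> (y = x \<and> c = b)" using q qe by auto
      thus "lamQ T q * hs (E y c k) (PiQ q X) = 0"
        using hs_PiU_gen[of x a b y c k X] q qe y c k by (auto simp: PiQ_def)
    qed
  qed
  also have "\<dots> = hs (E y c k) (\<Sum>q\<in>idx3 Xi m. msc (lamQ T q) (PiQ q X))"
    by (simp add: hs_sum_right hs_msc_right)
  finally show "hs (E y c k) (T X) = hs (E y c k) (\<Sum>q\<in>idx3 Xi m. msc (lamQ T q) (PiQ q X))" .
qed

end

lemma munit_nth[simp]: "munit i j $ k $ l = (if k = i \<and> l = j then 1 else 0)"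
  by (simp add: munit_def)

lemma hs_expand2: "hs X Y = (\<Sum>i\<in>UNIV. \<Sum>k\<in>UNIV. cnj (X$i$k) * Y$i$k)"
  unfolding hs_expand by (rule sum.swap)

lemma hs_munit: "hs A (munit i j) = cnj (A $ i $ j)"
proof -
  have "hs A (munit i j) = (\<Sum>k\<in>UNIV. \<Sum>l\<in>UNIV. if k = i \<and> l = j then cnj (A$k$l) else 0)"
    unfolding hs_expand2 by (intro sum.cong) auto
  also have "\<dots> = (\<Sum>k\<in>UNIV. if k = i then (\<Sum>l\<in>UNIV. if l = j then cnj (A$k$l) else 0) else 0)"
    by (intro sum.cong) auto
  also have "\<dots> = cnj (A $ i $ j)" by simp
  finally show ?thesis .
qed

lemma hsop_add_left: "hsop (\<lambda>X. F X + H X) T = hsop F T + hsop H T"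
  unfolding hsop_def by (simp add: hs_add_left sum.distrib)
lemma hsop_add_right: "hsop T (\<lambda>X. F X + H X) = hsop T F + hsop T H"
  unfolding hsop_def by (simp add: hs_add_right sum.distrib)
lemma hsop_msc_left: "hsop (\<lambda>X. msc c (F X)) T = cnj c * hsop F T"
  unfolding hsop_def by (simp add: hs_msc_left sum_distrib_left)
lemma hsop_msc_right: "hsop T (\<lambda>X. msc c (F X)) = c * hsop T F"
  unfolding hsop_def by (simp add: hs_msc_right sum_distrib_left)
lemma hsop_zero_left: "hsop (\<lambda>X. 0) T = 0" unfolding hsop_def by simp
lemma hsop_zero_right: "hsop T (\<lambda>X. 0) = 0" unfolding hsop_def by simp
lemma hsop_sum_left: "hsop (\<lambda>X. \<Sum>a\<in>A. F a X) T = (\<Sum>a\<in>A. hsop (F a) T)"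
  by (induct A rule: infinite_finite_induct) (simp_all add: hsop_zero_left hsop_add_left)
lemma hsop_sum_right: "hsop T (\<lambda>X. \<Sum>a\<in>A. F a X) = (\<Sum>a\<in>A. hsop T (F a))"
  by (induct A rule: infinite_finite_induct) (simp_all add: hsop_zero_right hsop_add_right)
lemma hsop_lin_right: "hsop T (\<lambda>X. \<Sum>a\<in>A. msc (c a) (F a X)) = (\<Sum>a\<in>A. c a * hsop T (F a))"
  by (simp add: hsop_sum_right hsop_msc_right)
lemma hsop_lin_left: "hsop (\<lambda>X. \<Sum>a\<in>A. msc (c a) (F a X)) T = (\<Sum>a\<in>A. cnj (c a) * hsop (F a) T)"
  by (simp add: hsop_sum_left hsop_msc_left)
lemma hsop_cnj: "cnj (hsop S T) = hsop T S"
  unfolding hsop_def by (simp add: hs_cnj)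

lemma hsop_rank1: "hsop (\<lambda>X. msc (hs A X) B) (\<lambda>X. msc (hs C X) D) = hs C A * hs B D"
proof -
  have "hsop (\<lambda>X. msc (hs A X) B) (\<lambda>X. msc (hs C X) D) =
     (\<Sum>i\<in>UNIV. \<Sum>j\<in>UNIV. (cnj (C$i$j) * A$i$j) * hs B D)"
    unfolding hsop_def by (simp add: hs_msc_left hs_msc_right hs_munit mult.commute mult.left_commute)
  also have "\<dots> = hs C A * hs B D"
    unfolding hs_expand2 by (simp add: sum_distrib_right)
  finally show ?thesis .
qed

lemma tw_entry: "(madj A ** munit i j ** B) $ k $ l = cnj (A$i$k) * B$j$l"
proof -
  have "(madj A ** munit i j ** B) $ k $ l = (\<Sum>q\<in>UNIV. (\<Sum>p\<in>UNIV. cnj (A$p$k) * (if p = i \<and> q = j then 1 else 0)) * B$q$l)"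
    by (simp add: matrix_matrix_mult_def)
  also have "\<dots> = (\<Sum>q\<in>UNIV. (if q = j then cnj (A$i$k) else 0) * B$q$l)"
  proof (rule sum.cong[OF refl])
    fix q
    have "(\<Sum>p\<in>UNIV. cnj (A$p$k) * (if p = i \<and> q = j then 1 else 0)) = (\<Sum>p\<in>UNIV. if p = i then (if q = j then cnj (A$p$k) else 0) else 0)"
      by (rule sum.cong) auto
    also have "\<dots> = (if q = j then cnj (A$i$k) else 0)" by (simp add: sum.delta')
    finally show "(\<Sum>p\<in>UNIV. cnj (A$p$k) * (if p = i \<and> q = j then 1 else 0)) * B$q$l = (if q = j then cnj (A$i$k) else 0) * B$q$l" by simp
  qed
  also have "\<dots> = cnj (A$i$k) * B$j$l"
  proof -
    have "(\<Sum>q\<in>UNIV. (if q = j then cnj (A$i$k) else 0) * B$q$l) = (\<Sum>q\<in>UNIV. if q = j then cnj (A$i$k) * B$q$l else 0)"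
      by (rule sum.cong) auto
    thus ?thesis by (simp add: sum.delta')
  qed
  finally show ?thesis .
qed

lemma hsop_twirl1: "hsop (\<lambda>X. madj A ** X ** B) (\<lambda>X. madj C ** X ** D) = hs C A * hs B D"
proof -
  have e: "hs (madj A ** munit i j ** B) (madj C ** munit i j ** D) =
     (\<Sum>k\<in>UNIV. cnj (C$i$k) * A$i$k) * (\<Sum>l\<in>UNIV. cnj (B$j$l) * D$j$l)" for i j
  proof -
    have "hs (madj A ** munit i j ** B) (madj C ** munit i j ** D) =
       (\<Sum>k\<in>UNIV. \<Sum>l\<in>UNIV. (cnj (C$i$k) * A$i$k) * (cnj (B$j$l) * D$j$l))"
      unfolding hs_expand2 tw_entry by (intro sum.cong) (auto simp: mult.commute mult.left_commute)
    thus ?thesis by (simp add: sum_product)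
  qed
  have "hsop (\<lambda>X. madj A ** X ** B) (\<lambda>X. madj C ** X ** D) =
    (\<Sum>i\<in>UNIV. \<Sum>j\<in>UNIV. (\<Sum>k\<in>UNIV. cnj (C$i$k) * A$i$k) * (\<Sum>l\<in>UNIV. cnj (B$j$l) * D$j$l))"
    unfolding hsop_def e ..
  also have "\<dots> = hs C A * hs B D"
    unfolding hs_expand2 by (simp add: sum_product)
  finally show ?thesis .
qed

lemma nsq: "d \<ge> (1::nat) \<Longrightarrow> cnj (complex_of_real (1 / sqrt (real d))) * complex_of_real (1 / sqrt (real d)) * of_nat d = 1"
proof -
  assume "d \<ge> 1"
  hence "(1 / sqrt (real d)) * (1 / sqrt (real d)) * real d = 1"
    by (simp add: field_simps)
  hence h: "complex_of_real ((1 / sqrt (real d)) * (1 / sqrt (real d)) * real d) = 1" by simp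
  have "cnj (complex_of_real (1 / sqrt (real d))) * complex_of_real (1 / sqrt (real d)) * of_nat d =
    complex_of_real ((1 / sqrt (real d)) * (1 / sqrt (real d)) * real d)"
    by (simp only: complex_cnj_complex_of_real of_real_mult of_real_of_nat_eq)
  thus ?thesis using h by (simp only:)
qed

context S15 begin

lemma pairsum: assumes x: "x \<in> Xi" and a: "a \<in> {1..m x}" and b: "b \<in> {1..m x}"
  and y: "y \<in> Xi" and c: "c \<in> {1..m y}" and e: "e \<in> {1..m y}"
  shows "(\<Sum>i\<in>{1..d x}. \<Sum>j\<in>{1..d y}. hs (E y c j) (E x a i) * hs (E x b i) (E y e j)) =
    (if (x, a, b) = (y, c, e) then of_nat (d x) else 0)"
proof (cases "(x, a, b) = (y, c, e)")
  case True
  hence yx: "y = x" "c = a" "e = b" by auto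
  have "(\<Sum>i\<in>{1..d x}. \<Sum>j\<in>{1..d y}. hs (E y c j) (E x a i) * hs (E x b i) (E y e j)) =
     (\<Sum>i\<in>{1..d x}. \<Sum>j\<in>{1..d x}. if i = j then 1 else 0)"
    unfolding yx by (intro sum.cong refl) (use ortho x a b in auto)
  also have "\<dots> = of_nat (d x)" by simp
  finally show ?thesis using True by simp
next
  case False
  have "(\<Sum>i\<in>{1..d x}. \<Sum>j\<in>{1..d y}. hs (E y c j) (E x a i) * hs (E x b i) (E y e j)) = 0"
  proof (intro sum.neutral ballI)
    fix i j assume i: "i \<in> {1..d x}" and j: "j \<in> {1..d y}"
    show "hs (E y c j) (E x a i) * hs (E x b i) (E y e j) = 0"
      using ortho[OF y c j x a i] ortho[OF x b i y e j] False by auto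
  qed
  thus ?thesis by (simp only: if_not_P[OF False])
qed

lemma PiU_as: "PiU d E x a b = (\<lambda>X. \<Sum>i\<in>{1..d x}. msc (hs (E x a i) X) (E x b i))"
  unfolding PiU_def by (rule ext) simp
lemma TwirlU_as: "TwirlU d E x a b = (\<lambda>X. \<Sum>i\<in>{1..d x}. madj (E x a i) ** X ** E x b i)"
  unfolding TwirlU_def by (rule ext) simp

lemma hsop_PiU: assumes "x \<in> Xi" "a \<in> {1..m x}" "b \<in> {1..m x}" "y \<in> Xi" "c \<in> {1..m y}" "e \<in> {1..m y}"
  shows "hsop (PiU d E x a b) (PiU d E y c e) = (if (x, a, b) = (y, c, e) then of_nat (d x) else 0)"
  unfolding PiU_as hsop_sum_left hsop_sum_right hsop_rank1 by (rule pairsum[OF assms])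

lemma hsop_TwirlU: assumes "x \<in> Xi" "a \<in> {1..m x}" "b \<in> {1..m x}" "y \<in> Xi" "c \<in> {1..m y}" "e \<in> {1..m y}"
  shows "hsop (TwirlU d E x a b) (TwirlU d E y c e) = (if (x, a, b) = (y, c, e) then of_nat (d x) else 0)"
  unfolding TwirlU_as hsop_sum_left hsop_sum_right hsop_twirl1 by (rule pairsum[OF assms])

end

lemma enum_fin: "finite I \<Longrightarrow> \<exists>e. bij_betw e {..<card I} I"
  using ex_bij_betw_nat_finite[of I] by (simp add: lessThan_atLeast0)

lemma L3_I:
  fixes U :: "'a \<Rightarrow> 'a \<Rightarrow> complex"
  assumes I: "finite I" and col: "\<forall>a\<in>I. \<forall>b\<in>I. (\<Sum>c\<in>I. cnj (U c a) * U c b) = (if a = b then 1 else 0)"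
  shows "\<forall>a\<in>I. \<forall>b\<in>I. (\<Sum>c\<in>I. U a c * cnj (U b c)) = (if a = b then 1 else 0)"
proof -
  obtain e where e: "bij_betw e {..<card I} I" using enum_fin[OF I] by blast
  define N where "N = card I"
  have eN: "bij_betw e {..<N} I" using e unfolding N_def .
  have einj: "t < N \<Longrightarrow> s < N \<Longrightarrow> e t = e s \<longleftrightarrow> t = s" for t s
    using eN unfolding bij_betw_def inj_on_def by auto
  have ein: "t < N \<Longrightarrow> e t \<in> I" for t using eN unfolding bij_betw_def by auto
  define U' where "U' t s = U (e t) (e s)" for t s
  have "\<forall>a<N. \<forall>b<N. (\<Sum>c<N. cnj (U' c a) * U' c b) = (if a = b then 1 else 0)"
  proof (intro allI impI)
    fix a b assume a: "a < N" and b: "b < N"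
    have "(\<Sum>c<N. cnj (U' c a) * U' c b) = (\<Sum>c\<in>I. cnj (U c (e a)) * U c (e b))"
      unfolding U'_def by (rule sum.reindex_bij_betw[OF eN])
    also have "\<dots> = (if a = b then 1 else 0)" using col ein[OF a] ein[OF b] einj[OF a b] by simp
    finally show "(\<Sum>c<N. cnj (U' c a) * U' c b) = (if a = b then 1 else 0)" .
  qed
  from L3_square[OF this] have row: "\<forall>a<N. \<forall>b<N. (\<Sum>c<N. U' a c * cnj (U' b c)) = (if a = b then 1 else 0)" .
  show ?thesis
  proof (intro ballI)
    fix a b assume a: "a \<in> I" and b: "b \<in> I"
    obtain t where t: "t < N" "a = e t" using a eN unfolding bij_betw_def by auto
    obtain s where s: "s < N" "b = e s" using b eN unfolding bij_betw_def by auto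
    have "(\<Sum>c\<in>I. U a c * cnj (U b c)) = (\<Sum>c<N. U' t c * cnj (U' s c))"
      unfolding U'_def t s by (rule sum.reindex_bij_betw[OF eN, symmetric])
    also have "\<dots> = (if a = b then 1 else 0)" using row t s einj[OF t(1) s(1)] by simp
    finally show "(\<Sum>c\<in>I. U a c * cnj (U b c)) = (if a = b then 1 else 0)" .
  qed
qed

type_synonym 'n cmap = "'n cmat \<Rightarrow> 'n cmat"

lemma onb_parseval: assumes onb: "onb_maps S I (f :: 'a \<Rightarrow> ('n::finite) cmap)" and I: "finite I" and T: "T \<in> S"
  shows "T = (\<lambda>X. \<Sum>a\<in>I. msc (hsop (f a) T) (f a X))"
proof -
  obtain c where c: "T = (\<lambda>X. \<Sum>a\<in>I. msc (c a) (f a X))" using onb T unfolding onb_maps_def by blast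
  have "hsop (f b) T = c b" if b: "b \<in> I" for b
  proof -
    have "hsop (f b) T = (\<Sum>a\<in>I. c a * hsop (f b) (f a))" unfolding c by (rule hsop_lin_right)
    also have "\<dots> = (\<Sum>a\<in>I. c a * (if b = a then 1 else 0))"
      by (rule sum.cong) (use onb b in \<open>auto simp: onb_maps_def\<close>)
    also have "\<dots> = c b" by (rule sum_delta_mult[OF I b])
    finally show ?thesis .
  qed
  hence "(\<lambda>X. \<Sum>a\<in>I. msc (hsop (f a) T) (f a X)) = (\<lambda>X. \<Sum>a\<in>I. msc (c a) (f a X))"
    by (intro ext sum.cong) auto
  thus ?thesis using c by simp
qed

lemma onb_col: assumes onb: "onb_maps S I (f :: 'a \<Rightarrow> ('n::finite) cmap)" and I: "finite I"
  and hS: "h a \<in> S" "h b \<in> S"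
  shows "(\<Sum>c\<in>I. cnj (hsop (f c) (h a)) * hsop (f c) (h b)) = hsop (h a) (h b)"
proof -
  have "hsop (h a) (h b) = hsop (h a) (\<lambda>X. \<Sum>c\<in>I. msc (hsop (f c) (h b)) (f c X))"
    using onb_parseval[OF onb I hS(2)] by simp
  also have "\<dots> = (\<Sum>c\<in>I. hsop (f c) (h b) * hsop (h a) (f c))" by (rule hsop_lin_right)
  also have "\<dots> = (\<Sum>c\<in>I. cnj (hsop (f c) (h a)) * hsop (f c) (h b))"
    by (rule sum.cong) (auto simp: hsop_cnj[of "f _" "h a", symmetric])
  finally show ?thesis by simp
qed

lemma onb_unitary: assumes f: "onb_maps S I (f :: 'a \<Rightarrow> ('n::finite) cmap)" and h: "onb_maps S I h" and I: "finite I"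
  shows "unitary_on I (\<lambda>p q. hsop (f p) (h q))"
  unfolding unitary_on_def
proof (intro conjI ballI)
  fix a b assume a: "a \<in> I" and b: "b \<in> I"
  have hS: "h a \<in> S" "h b \<in> S" using h a b unfolding onb_maps_def by auto
  show "(\<Sum>c\<in>I. cnj (hsop (f c) (h a)) * hsop (f c) (h b)) = (if a = b then 1 else 0)"
    using onb_col[OF f I hS] h a b unfolding onb_maps_def by simp
next
  fix a b assume a: "a \<in> I" and b: "b \<in> I"
  have fS: "f a \<in> S" "f b \<in> S" using f a b unfolding onb_maps_def by auto
  have "(\<Sum>c\<in>I. cnj (hsop (h c) (f b)) * hsop (h c) (f a)) = hsop (f b) (f a)"
    by (rule onb_col[OF h I fS(2) fS(1)])
  hence "cnj (\<Sum>c\<in>I. cnj (hsop (h c) (f b)) * hsop (h c) (f a)) = cnj (hsop (f b) (f a))" by simp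
  hence "(\<Sum>c\<in>I. hsop (h c) (f b) * cnj (hsop (h c) (f a))) = hsop (f a) (f b)"
    by (simp add: hsop_cnj)
  hence "(\<Sum>c\<in>I. hsop (f a) (h c) * cnj (hsop (f b) (h c))) = hsop (f a) (f b)"
    by (simp add: hsop_cnj[of "h _", symmetric] mult.commute)
  thus "(\<Sum>c\<in>I. hsop (f a) (h c) * cnj (hsop (f b) (h c))) = (if a = b then 1 else 0)"
    using f a b unfolding onb_maps_def by simp
qed


lemma onb_square: assumes f: "onb_maps S I (f :: 'a \<Rightarrow> ('n::finite) cmap)" and I: "finite I"
  and hS: "\<forall>b\<in>I. h b \<in> S"
  and horth: "\<forall>a\<in>I. \<forall>b\<in>I. hsop (h a) (h b) = (if a = b then 1 else 0)"
  shows "onb_maps S I h"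
  unfolding onb_maps_def
proof (intro conjI ballI hS[rule_format] horth[rule_format])
  fix T assume T: "T \<in> S"
  define U where "U a b = hsop (f a) (h b)" for a b
  have col: "\<forall>a\<in>I. \<forall>b\<in>I. (\<Sum>c\<in>I. cnj (U c a) * U c b) = (if a = b then 1 else 0)"
  proof (intro ballI)
    fix a b assume a: "a \<in> I" and b: "b \<in> I"
    show "(\<Sum>c\<in>I. cnj (U c a) * U c b) = (if a = b then 1 else 0)"
      unfolding U_def using onb_col[OF f I hS[rule_format, OF a] hS[rule_format, OF b]] horth a b by simp
  qed
  have row: "\<forall>a\<in>I. \<forall>b\<in>I. (\<Sum>c\<in>I. U a c * cnj (U b c)) = (if a = b then 1 else 0)"
    by (rule L3_I[OF I col])
  define t where "t a = hsop (f a) T" for a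
  define c where "c b = (\<Sum>a\<in>I. t a * cnj (U a b))" for b
  have cU: "(\<Sum>b\<in>I. c b * U a b) = t a" if a: "a \<in> I" for a
  proof -
    have "(\<Sum>b\<in>I. c b * U a b) = (\<Sum>b\<in>I. \<Sum>a'\<in>I. t a' * (U a b * cnj (U a' b)))"
      unfolding c_def sum_distrib_right by (intro sum.cong refl) (simp add: ac_simps)
    also have "\<dots> = (\<Sum>a'\<in>I. t a' * (\<Sum>b\<in>I. U a b * cnj (U a' b)))"
      by (subst sum.swap) (simp add: sum_distrib_left)
    also have "\<dots> = (\<Sum>a'\<in>I. t a' * (if a = a' then 1 else 0))"
      by (rule sum.cong) (use row a in auto)
    also have "\<dots> = t a" by (rule sum_delta_mult[OF I a])
    finally show ?thesis .
  qed
  have "T = (\<lambda>X. \<Sum>b\<in>I. msc (c b) (h b X))"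
  proof (rule ext)
    fix X
    have hb: "h b X = (\<Sum>a\<in>I. msc (U a b) (f a X))" if "b \<in> I" for b
      unfolding U_def using fun_cong[OF onb_parseval[OF f I hS[rule_format, OF that]], of X] by simp
    have "(\<Sum>b\<in>I. msc (c b) (h b X)) = (\<Sum>b\<in>I. \<Sum>a\<in>I. msc (c b * U a b) (f a X))"
      by (rule sum.cong) (simp_all add: hb msc_sum msc_msc)
    also have "\<dots> = (\<Sum>a\<in>I. msc (\<Sum>b\<in>I. c b * U a b) (f a X))"
      by (subst sum.swap) (simp add: msc_sum_left)
    also have "\<dots> = (\<Sum>a\<in>I. msc (t a) (f a X))"
      by (rule sum.cong) (simp_all add: cU)
    also have "\<dots> = T X" unfolding t_def using fun_cong[OF onb_parseval[OF f I T], of X] by simp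
    finally show "T X = (\<Sum>b\<in>I. msc (c b) (h b X))" by simp
  qed
  thus "\<exists>c. T = (\<lambda>X. \<Sum>a\<in>I. msc (c a) (h a X))" by blast
qed

lemma onb_dim: assumes f: "onb_maps S I (f :: 'a \<Rightarrow> ('n::finite) cmap)" and I: "finite I"
  shows "map_dim S = card I"
proof -
  obtain e where e: "bij_betw e {..<card I} I" using enum_fin[OF I] by blast
  define N where "N = card I"
  have eN: "bij_betw e {..<N} I" using e unfolding N_def .
  have einj: "t < N \<Longrightarrow> s < N \<Longrightarrow> e t = e s \<longleftrightarrow> t = s" for t s
    using eN unfolding bij_betw_def inj_on_def by auto
  have ein: "t < N \<Longrightarrow> e t \<in> I" for t using eN unfolding bij_betw_def by auto
  have fS: "a \<in> I \<Longrightarrow> f a \<in> S" for a using f unfolding onb_maps_def by auto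
  have forth: "a \<in> I \<Longrightarrow> b \<in> I \<Longrightarrow> hsop (f a) (f b) = (if a = b then 1 else 0)" for a b
    using f unfolding onb_maps_def by auto
  define P where "P (k::nat) \<longleftrightarrow> (\<exists>g. (\<forall>l<k. g l \<in> S) \<and> (\<forall>T\<in>S. \<exists>c. T = (\<lambda>X. \<Sum>l<k. msc (c l) (g l X))))" for k
  have PN: "P N"
    unfolding P_def
  proof (rule exI[of _ "\<lambda>l. f (e l)"], intro conjI allI impI ballI)
    show "f (e l) \<in> S" if "l < N" for l using fS ein that by auto
    fix T assume T: "T \<in> S"
    obtain c where c: "T = (\<lambda>X. \<Sum>a\<in>I. msc (c a) (f a X))" using f T unfolding onb_maps_def by blast
    have "T = (\<lambda>X. \<Sum>l<N. msc (c (e l)) (f (e l) X))"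
      unfolding c by (intro ext sum.reindex_bij_betw[OF eN, symmetric])
    thus "\<exists>c. T = (\<lambda>X. \<Sum>l<N. msc (c l) (f (e l) X))" by (intro exI[where x="\<lambda>l. c (e l)"])
  qed
  have low: "N \<le> k" if Pk: "P k" for k
  proof (rule ccontr)
    assume "\<not> N \<le> k"
    hence kN: "k < N" by simp
    obtain g where g: "\<forall>l<k. g l \<in> S" and gs: "\<forall>T\<in>S. \<exists>c. T = (\<lambda>X. \<Sum>l<k. msc (c l) (g l X))"
      using Pk unfolding P_def by blast
    have "\<forall>t. \<exists>c. t < N \<longrightarrow> f (e t) = (\<lambda>X. \<Sum>l<k. msc (c l) (g l X))"
      using gs fS ein by blast
    then obtain C where C: "\<And>t. t < N \<Longrightarrow> f (e t) = (\<lambda>X. \<Sum>l<k. msc (C t l) (g l X))"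
      by metis
    obtain w where w0: "\<exists>a<N. w a \<noteq> 0" and wl: "\<forall>l<k. (\<Sum>a<N. C a l * w a) = 0"
      using L2_homog[OF kN, of C] by blast
    define Z where "Z = (\<lambda>X. \<Sum>t<N. msc (w t) (f (e t) X))"
    have Z0: "Z = (\<lambda>X. 0)"
    proof (rule ext)
      fix X
      have "Z X = (\<Sum>t<N. \<Sum>l<k. msc (w t * C t l) (g l X))"
        unfolding Z_def by (rule sum.cong) (simp_all add: C msc_sum msc_msc)
      also have "\<dots> = (\<Sum>l<k. msc (\<Sum>t<N. C t l * w t) (g l X))"
        by (subst sum.swap) (simp add: msc_sum_left mult.commute)
      also have "\<dots> = 0" using wl by simp
      finally show "Z X = 0" .
    qed
    have "w s = 0" if s: "s < N" for s
    proof -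
      have "hsop (f (e s)) Z = (\<Sum>t<N. w t * hsop (f (e s)) (f (e t)))"
        unfolding Z_def by (rule hsop_lin_right)
      also have "\<dots> = (\<Sum>t<N. w t * (if s = t then 1 else 0))"
        by (rule sum.cong) (use forth ein einj s in auto)
      also have "\<dots> = w s" by (rule sum_delta_mult) (use s in auto)
      finally show ?thesis unfolding Z0 hsop_zero_right by simp
    qed
    with w0 show False by blast
  qed
  have "map_dim S = (LEAST k. P k)" unfolding map_dim_def P_def ..
  also have "\<dots> = N" by (rule Least_equality[of P N, OF PN low])
  finally show ?thesis unfolding N_def .
qed


lemma HomG_msc: "T \<in> HomG G r \<Longrightarrow> (\<lambda>X. msc c (T X)) \<in> HomG G r"
  unfolding HomG_def clinear_map_def by (auto simp: msc_add msc_msc mult.commute conj_act_msc)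

lemma card_idx3: "finite Xi \<Longrightarrow> card (idx3 Xi m) = (\<Sum>x\<in>Xi. (m x)\<^sup>2)"
proof -
  assume fin: "finite Xi"
  have "idx3 Xi m = Sigma Xi (\<lambda>x. {1..m x} \<times> {1..m x})" unfolding idx3_def by auto
  hence "card (idx3 Xi m) = (\<Sum>x\<in>Xi. card ({1..m x} \<times> {1..m x}))" using fin by simp
  also have "\<dots> = (\<Sum>x\<in>Xi. (m x)\<^sup>2)" by (simp add: card_cartesian_product power2_eq_square)
  finally show ?thesis .
qed

context S15 begin

abbreviation sc where "sc x \<equiv> complex_of_real (1 / sqrt (real (d x)))"

lemma nPi_eq: "nPi d E (x, a, b) = (\<lambda>X. msc (sc x) (PiU d E x a b X))"
  unfolding nPi_def by simp
lemma nTwirl_eq: "nTwirl d E (x, a, b) = (\<lambda>X. msc (sc x) (TwirlU d E x a b X))"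
  unfolding nTwirl_def by simp

lemma nPi_HomG: "q \<in> idx3 Xi m \<Longrightarrow> nPi d E q \<in> HomG G r"
  by (cases q) (auto simp: nPi_eq intro!: HomG_msc PiU_HomG)
lemma nTwirl_HomG: "q \<in> idx3 Xi m \<Longrightarrow> nTwirl d E q \<in> HomG G r"
  by (cases q) (auto simp: nTwirl_eq intro!: HomG_msc TwirlU_HomG)

lemma n_orth: assumes p: "p \<in> idx3 Xi m" and q: "q \<in> idx3 Xi m"
  and F: "\<And>x a b. F (x, a, b) = (\<lambda>X. msc (sc x) (K x a b X))"
  and K: "\<And>x a b y c e. x \<in> Xi \<Longrightarrow> a \<in> {1..m x} \<Longrightarrow> b \<in> {1..m x} \<Longrightarrow> y \<in> Xi \<Longrightarrow> c \<in> {1..m y} \<Longrightarrow> e \<in> {1..m y} \<Longrightarrow>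
     hsop (K x a b) (K y c e) = (if (x, a, b) = (y, c, e) then of_nat (d x) else 0)"
  shows "hsop (F p) (F q) = (if p = q then 1 else 0)"
proof -
  obtain x a b where pe: "p = (x, a, b)" by (cases p)
  obtain y c e where qe: "q = (y, c, e)" by (cases q)
  have h: "hsop (F p) (F q) = cnj (sc x) * (sc y * (if (x, a, b) = (y, c, e) then of_nat (d x) else 0))"
    unfolding pe qe F hsop_msc_left hsop_msc_right using K[of x a b y c e] p q pe qe by simp
  show ?thesis
  proof (cases "p = q")
    case True
    have t: "(x, a, b) = (y, c, e)" using True pe qe by simp
    have "hsop (F p) (F q) = cnj (sc x) * (sc y * of_nat (d x))" using h by (simp only: if_P[OF t])
    also have "\<dots> = cnj (sc x) * sc x * of_nat (d x)" using t by (simp only: prod.inject mult.assoc)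
    also have "\<dots> = 1" by (rule nsq) (use pos p pe in auto)
    finally show ?thesis using True by simp
  next
    case False
    have t: "(x, a, b) \<noteq> (y, c, e)" using False pe qe by simp
    show ?thesis using h by (simp only: if_not_P[OF t] if_not_P[OF False] mult_zero_right)
  qed
qed

lemma onb_Pi: "onb_maps (HomG G r) (idx3 Xi m) (nPi d E)"
  unfolding onb_maps_def
proof (intro conjI ballI)
  show "nPi d E a \<in> HomG G r" if "a \<in> idx3 Xi m" for a by (rule nPi_HomG[OF that])
  show "hsop (nPi d E a) (nPi d E b) = (if a = b then 1 else 0)" if "a \<in> idx3 Xi m" "b \<in> idx3 Xi m" for a b
    by (rule n_orth[OF that nPi_eq hsop_PiU])
  fix T assume T: "T \<in> HomG G r"
  define cq where "cq q = (case q of (x, a, b) \<Rightarrow> lam T x a b * complex_of_real (sqrt (real (d x))))" for q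
  have "T = (\<lambda>X. \<Sum>q\<in>idx3 Xi m. msc (cq q) (nPi d E q X))"
  proof (rule ext)
    fix X
    have "T X = (\<Sum>q\<in>idx3 Xi m. msc (lamQ T q) (PiQ q X))" by (rule HomG_span[OF T])
    also have "\<dots> = (\<Sum>q\<in>idx3 Xi m. msc (cq q) (nPi d E q X))"
    proof (rule sum.cong[OF refl])
      fix q assume q: "q \<in> idx3 Xi m"
      obtain x a b where qe: "q = (x, a, b)" by (cases q)
      have dx: "real (d x) > 0" using pos q qe by auto
      have "sqrt (real (d x)) * (1 / sqrt (real (d x))) = 1" using dx by simp
      hence key: "complex_of_real (sqrt (real (d x))) * sc x = 1"
        by (simp only: of_real_mult[symmetric] of_real_1)
      show "msc (lamQ T q) (PiQ q X) = msc (cq q) (nPi d E q X)"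
        unfolding qe nPi_eq cq_def lamQ_def PiQ_def by (simp only: prod.case msc_msc mult.assoc key mult_1_right)
    qed
    finally show "T X = (\<Sum>q\<in>idx3 Xi m. msc (cq q) (nPi d E q X))" .
  qed
  thus "\<exists>c. T = (\<lambda>X. \<Sum>q\<in>idx3 Xi m. msc (c q) (nPi d E q X))" by blast
qed

lemma onb_Twirl: "onb_maps (HomG G r) (idx3 Xi m) (nTwirl d E)"
proof (rule onb_square[OF onb_Pi idx3_fin[OF fin]])
  show "\<forall>b\<in>idx3 Xi m. nTwirl d E b \<in> HomG G r" using nTwirl_HomG by blast
  show "\<forall>a\<in>idx3 Xi m. \<forall>b\<in>idx3 Xi m. hsop (nTwirl d E a) (nTwirl d E b) = (if a = b then 1 else 0)"
    using n_orth[OF _ _ nTwirl_eq hsop_TwirlU] by blast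
qed

lemma final: "onb_maps (HomG G r) (idx3 Xi m) (nPi d E)
       \<and> onb_maps (HomG G r) (idx3 Xi m) (nTwirl d E)
       \<and> map_dim (HomG G r) = (\<Sum>x\<in>Xi. (m x)\<^sup>2)
       \<and> unitary_on (idx3 Xi m) (\<lambda>p q. hsop (nPi d E p) (nTwirl d E q))"
  using onb_Pi onb_Twirl onb_dim[OF onb_Pi idx3_fin[OF fin]] card_idx3[OF fin]
    onb_unitary[OF onb_Pi onb_Twirl idx3_fin[OF fin]] by simp

end

theorem mainTheorem15:
  fixes G :: "('g, 'b) monoid_scheme"
    and r :: "'g \<Rightarrow> complex^'n::finite^'n"
    and Xi :: "'x set"
    and m d :: "'x \<Rightarrow> nat"
    and E :: "'x \<Rightarrow> nat \<Rightarrow> nat \<Rightarrow> complex^'n^'n"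
  defines "J \<equiv> {(x, a, i). x \<in> Xi \<and> a \<in> {1..m x} \<and> i \<in> {1..d x}}"
  assumes rep: "unitary_rep G r"
    and fin: "finite Xi"
    and pos: "\<forall>x\<in>Xi. 1 \<le> m x \<and> 1 \<le> d x"
    and orth: "\<forall>(x, a, i)\<in>J. \<forall>(y, b, j)\<in>J.
                 hs (E x a i) (E y b j) = (if (x, a, i) = (y, b, j) then 1 else 0)"
    and span_all: "mspan J (\<lambda>(x, a, i). E x a i) = UNIV"
    and equiv: "\<forall>x\<in>Xi. \<forall>g\<in>carrier G. \<exists>C :: nat \<Rightarrow> nat \<Rightarrow> complex.
                 \<forall>a\<in>{1..m x}. \<forall>i\<in>{1..d x}.
                   conj_act r g (E x a i) = (\<Sum>j\<in>{1..d x}. msc (C j i) (E x a j))"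
    and irred: "\<forall>x\<in>Xi. irreducible_sub G r (mspan {1..d x} (E x 1))"
    and noniso: "\<forall>x\<in>Xi. \<forall>y\<in>Xi. x \<noteq> y \<longrightarrow>
                 \<not> iso_sub G r (mspan {1..d x} (E x 1)) (mspan {1..d y} (E y 1))"
  shows "onb_maps (HomG G r) (idx3 Xi m) (nPi d E)
       \<and> onb_maps (HomG G r) (idx3 Xi m) (nTwirl d E)
       \<and> map_dim (HomG G r) = (\<Sum>x\<in>Xi. (m x)\<^sup>2)
       \<and> unitary_on (idx3 Xi m) (\<lambda>p q. hsop (nPi d E p) (nTwirl d E q))"
proof -
  have J_eq: "J = {(x, a, i). x \<in> Xi \<and> a \<in> {1..m x} \<and> i \<in> {1..d x}}" unfolding J_def ..
  interpret S: S15 G r Xi m d E J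
    by (rule S15.intro[OF J_eq rep fin pos orth span_all equiv irred noniso])
  show ?thesis by (rule S.final)
qed


end
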